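(* Let $(V_1, V_2)$ be an isometric pair such that $C(V_1, V_2)$ is compact. Then \[ \operatorname{rank} C(V_1, V_2) = 2\, \operatorname{rank} [V_2^*, V_1] + \dim E_1 - \dim E_{-1}. \]
   Context: All Hilbert spaces are complex and separable. An isometric pair is a pair $(V_1,V_2)$ of commuting isometries on $\mathcal{H}$. $[V_2^*,V_1] := V_2^*V_1 - V_1V_2^*$. $C(V_1,V_2) := I - V_1V_1^* - V_2V_2^* + V_1V_2V_1^*V_2^*$ and $E_\mu := \ker(C(V_1,V_2)-\mu I)$. *)

theory Defs
  imports "HOL-Analysis.Analysis"
begin

text \<open>Concrete model of a complex separable Hilbert space: l2 over a countable
index type 'i (every nonzero separable Hilbert space is unitarily equivalent to one of these).
Operators are functions on 'i \<Rightarrow> complex; only their behaviour on l2 matters.\<close>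

definition l2 :: "('i::countable \<Rightarrow> complex) set" where
  "l2 = {f. (\<lambda>i. (cmod (f i))\<^sup>2) summable_on UNIV}"

definition cinner :: "('i::countable \<Rightarrow> complex) \<Rightarrow> ('i \<Rightarrow> complex) \<Rightarrow> complex" where
  "cinner f g = (\<Sum>\<^sub>\<infinity>i. cnj (f i) * g i)"

definition l2norm :: "('i::countable \<Rightarrow> complex) \<Rightarrow> real" where
  "l2norm f = sqrt (\<Sum>\<^sub>\<infinity>i. (cmod (f i))\<^sup>2)"

definition bounded_op :: "(('i::countable \<Rightarrow> complex) \<Rightarrow> ('i \<Rightarrow> complex)) \<Rightarrow> bool" where
  "bounded_op T \<longleftrightarrow>
     (\<forall>f\<in>l2. T f \<in> l2) \<and>
     (\<forall>f\<in>l2. \<forall>g\<in>l2. \<forall>a b. T (\<lambda>i. a * f i + b * g i) = (\<lambda>i. a * T f i + b * T g i)) \<and>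
     (\<exists>K. \<forall>f\<in>l2. l2norm (T f) \<le> K * l2norm f)"

text \<open>The Hilbert-space adjoint (exists and is unique on l2 by the Riesz representation theorem).\<close>
definition adj :: "(('i::countable \<Rightarrow> complex) \<Rightarrow> ('i \<Rightarrow> complex)) \<Rightarrow> (('i \<Rightarrow> complex) \<Rightarrow> ('i \<Rightarrow> complex))" where
  "adj T = (SOME S. bounded_op S \<and> (\<forall>f\<in>l2. \<forall>g\<in>l2. cinner (T f) g = cinner f (S g)))"

definition isometry :: "(('i::countable \<Rightarrow> complex) \<Rightarrow> ('i \<Rightarrow> complex)) \<Rightarrow> bool" where
  "isometry V \<longleftrightarrow> bounded_op V \<and> (\<forall>f\<in>l2. l2norm (V f) = l2norm f)"

definition isometric_pair :: "(('i::countable \<Rightarrow> complex) \<Rightarrow> ('i \<Rightarrow> complex)) \<Rightarrow> (('i \<Rightarrow> complex) \<Rightarrow> ('i \<Rightarrow> complex)) \<Rightarrow> bool" where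
  "isometric_pair V1 V2 \<longleftrightarrow> isometry V1 \<and> isometry V2 \<and> (\<forall>f\<in>l2. V1 (V2 f) = V2 (V1 f))"

definition compact_op :: "(('i::countable \<Rightarrow> complex) \<Rightarrow> ('i \<Rightarrow> complex)) \<Rightarrow> bool" where
  "compact_op T \<longleftrightarrow> bounded_op T \<and>
     (\<forall>x::nat \<Rightarrow> ('i \<Rightarrow> complex). (\<forall>n. x n \<in> l2) \<longrightarrow> (\<exists>B. \<forall>n. l2norm (x n) \<le> B) \<longrightarrow>
        (\<exists>r g. strict_mono r \<and> g \<in> l2 \<and> (\<lambda>n. l2norm (\<lambda>i. T (x (r n)) i - g i)) \<longlonglongrightarrow> 0))"

definition cindep :: "('i \<Rightarrow> complex) set \<Rightarrow> bool" where
  "cindep B \<longleftrightarrow> (\<forall>c. (\<lambda>i. \<Sum>b\<in>B. c b * b i) = (\<lambda>i. 0) \<longrightarrow> (\<forall>b\<in>B. c b = 0))"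

definition cdim :: "('i \<Rightarrow> complex) set \<Rightarrow> enat" where
  "cdim S = (SUP B\<in>{B. finite B \<and> B \<subseteq> S \<and> cindep B}. enat (card B))"

definition rank :: "(('i::countable \<Rightarrow> complex) \<Rightarrow> ('i \<Rightarrow> complex)) \<Rightarrow> enat" where
  "rank T = cdim (T ` l2)"

definition defect :: "(('i::countable \<Rightarrow> complex) \<Rightarrow> ('i \<Rightarrow> complex)) \<Rightarrow> (('i \<Rightarrow> complex) \<Rightarrow> ('i \<Rightarrow> complex)) \<Rightarrow> (('i \<Rightarrow> complex) \<Rightarrow> ('i \<Rightarrow> complex))" where
  "defect V1 V2 = (\<lambda>f i. f i - V1 (adj V1 f) i - V2 (adj V2 f) i
                         + V1 (V2 (adj V1 (adj V2 f))) i)"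

definition commut :: "(('i::countable \<Rightarrow> complex) \<Rightarrow> ('i \<Rightarrow> complex)) \<Rightarrow> (('i \<Rightarrow> complex) \<Rightarrow> ('i \<Rightarrow> complex)) \<Rightarrow> (('i \<Rightarrow> complex) \<Rightarrow> ('i \<Rightarrow> complex))" where
  "commut V1 V2 = (\<lambda>f i. adj V2 (V1 f) i - V1 (adj V2 f) i)"

definition eigsp :: "(('i::countable \<Rightarrow> complex) \<Rightarrow> ('i \<Rightarrow> complex)) \<Rightarrow> (('i \<Rightarrow> complex) \<Rightarrow> ('i \<Rightarrow> complex)) \<Rightarrow> complex \<Rightarrow> ('i \<Rightarrow> complex) set" where
  "eigsp V1 V2 \<mu> = {f\<in>l2. defect V1 V2 f = (\<lambda>i. \<mu> * f i)}"

end

theory Submission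
  imports Defs "HOL-Library.Function_Algebras"
begin

definition sc :: "complex \<Rightarrow> ('i \<Rightarrow> complex) \<Rightarrow> ('i \<Rightarrow> complex)" where
  "sc c f = (\<lambda>i. c * f i)"

lemma sc_apply[simp]: "sc c f i = c * f i"
  by (simp add: sc_def)

lemma sq_bound: "(cmod (a + b))\<^sup>2 \<le> 2*(cmod a)\<^sup>2 + 2*(cmod b)\<^sup>2"
proof -
  have "cmod (a+b) \<le> cmod a + cmod b" by (rule norm_triangle_ineq)
  hence "(cmod (a+b))\<^sup>2 \<le> (cmod a + cmod b)\<^sup>2"
    by (simp add: power_mono)
  also have "\<dots> \<le> 2*(cmod a)\<^sup>2 + 2*(cmod b)\<^sup>2"
  proof -
    have "2*(cmod a)\<^sup>2 + 2*(cmod b)\<^sup>2 - (cmod a + cmod b)\<^sup>2 = (cmod a - cmod b)\<^sup>2"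
      by (simp add: power2_eq_square algebra_simps)
    thus ?thesis using zero_le_power2[of "cmod a - cmod b"] by linarith
  qed
  finally show ?thesis .
qed

lemma l2_add[intro]: assumes "f \<in> l2" "g \<in> l2" shows "f + g \<in> l2"
proof -
  have "(\<lambda>i. 2*(cmod (f i))\<^sup>2 + 2*(cmod (g i))\<^sup>2) summable_on UNIV"
    using assms unfolding l2_def
    by (intro summable_on_add summable_on_cmult_right) auto
  hence "(\<lambda>i. (cmod (f i + g i))\<^sup>2) summable_on UNIV"
    by (rule summable_on_comparison_test) (auto simp: sq_bound)
  thus ?thesis by (simp add: l2_def)
qed

lemma l2_sc[intro]: assumes "f \<in> l2" shows "sc c f \<in> l2"
proof -
  have "(\<lambda>i. (cmod c)\<^sup>2 * (cmod (f i))\<^sup>2) summable_on UNIV"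
    using assms unfolding l2_def by (intro summable_on_cmult_right) auto
  thus ?thesis unfolding l2_def by (simp add: norm_mult power_mult_distrib)
qed

lemma l2_zero[intro, simp]: "0 \<in> l2"
  unfolding l2_def by simp

lemma l2_zero'[intro, simp]: "(\<lambda>i. 0) \<in> l2"
  unfolding l2_def by simp

lemma l2_uminus[intro]: "f \<in> l2 \<Longrightarrow> - f \<in> l2"
  unfolding l2_def by simp

lemma l2_diff[intro]: "f \<in> l2 \<Longrightarrow> g \<in> l2 \<Longrightarrow> f - g \<in> l2"
  using l2_add[of f "- g"] l2_uminus[of g] by simp

lemma l2_lin[intro]: "f \<in> l2 \<Longrightarrow> g \<in> l2 \<Longrightarrow> (\<lambda>i. a * f i + b * g i) \<in> l2"
  using l2_add[OF l2_sc[of f a] l2_sc[of g b]] by (simp add: plus_fun_def)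

lemma cinner_summable:
  assumes "f \<in> l2" "g \<in> l2"
  shows "(\<lambda>i. cnj (f i) * g i) summable_on UNIV"
proof -
  have S: "(\<lambda>i. ((cmod (f i))\<^sup>2 + (cmod (g i))\<^sup>2)) summable_on UNIV"
    using assms unfolding l2_def
    by (intro summable_on_add) auto
  have B: "norm (cnj (f i) * g i) \<le> ((cmod (f i))\<^sup>2 + (cmod (g i))\<^sup>2)" for i
  proof -
    have "(cmod (f i))\<^sup>2 + (cmod (g i))\<^sup>2 - cmod (f i) * cmod (g i) = (cmod (f i) - cmod (g i))\<^sup>2 + cmod (f i) * cmod (g i)"
      by (simp add: power2_eq_square algebra_simps)
    moreover have "0 \<le> (cmod (f i) - cmod (g i))\<^sup>2 + cmod (f i) * cmod (g i)" by simp
    ultimately show ?thesis by (simp add: norm_mult)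
  qed
  have "(\<lambda>i. norm (cnj (f i) * g i)) summable_on UNIV"
    by (rule Infinite_Sum.abs_summable_on_comparison_test'[OF S B])
  thus ?thesis using summable_on_iff_abs_summable_on_complex by blast
qed

lemma cinner_add_right:
  "f \<in> l2 \<Longrightarrow> g \<in> l2 \<Longrightarrow> h \<in> l2 \<Longrightarrow> cinner f (g + h) = cinner f g + cinner f h"
  unfolding cinner_def
  by (simp add: distrib_left infsum_add cinner_summable)

lemma cinner_sc_right: "cinner f (sc c g) = c * cinner f g"
  unfolding cinner_def sc_def
  by (simp add: mult.left_commute infsum_cmult_right')

lemma cinner_cnj: "cinner g f = cnj (cinner f g)"
  unfolding cinner_def by (simp flip: infsum_cnj add: mult.commute)

lemma cinner_add_left:
  "f \<in> l2 \<Longrightarrow> g \<in> l2 \<Longrightarrow> h \<in> l2 \<Longrightarrow> cinner (g + h) f = cinner g f + cinner h f"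
  by (metis cinner_cnj cinner_add_right complex_cnj_add)

lemma cinner_sc_left: "cinner (sc c g) f = cnj c * cinner g f"
  by (metis cinner_cnj cinner_sc_right complex_cnj_mult)

lemma cinner_zero_right[simp]: "cinner f 0 = 0"
  unfolding cinner_def by simp

lemma cinner_zero_left[simp]: "cinner 0 f = 0"
  unfolding cinner_def by simp

lemma cinner_uminus_right: "cinner f (- g) = - cinner f g"
  unfolding cinner_def by (simp add: infsum_uminus)

lemma cinner_uminus_left: "cinner (- g) f = - cinner g f"
  by (metis cinner_cnj cinner_uminus_right complex_cnj_minus)

lemma cinner_diff_right:
  "f \<in> l2 \<Longrightarrow> g \<in> l2 \<Longrightarrow> h \<in> l2 \<Longrightarrow> cinner f (g - h) = cinner f g - cinner f h"
  using cinner_add_right[of f g "- h"] cinner_uminus_right[of f h] l2_uminus[of h]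
  by simp

lemma cinner_diff_left:
  "f \<in> l2 \<Longrightarrow> g \<in> l2 \<Longrightarrow> h \<in> l2 \<Longrightarrow> cinner (g - h) f = cinner g f - cinner h f"
  by (metis cinner_cnj cinner_diff_right complex_cnj_diff)

lemma l2_sum_sq: "f \<in> l2 \<Longrightarrow> (\<lambda>i. (cmod (f i))\<^sup>2) summable_on UNIV"
  unfolding l2_def by simp

lemma l2norm_sq: "(l2norm f)\<^sup>2 = (\<Sum>\<^sub>\<infinity>i. (cmod (f i))\<^sup>2)"
  unfolding l2norm_def using infsum_nonneg[of UNIV "\<lambda>i. (cmod (f i))\<^sup>2"] by simp


lemma l2norm_nonneg[simp]: "0 \<le> l2norm f"
  unfolding l2norm_def using infsum_nonneg[of UNIV "\<lambda>i. (cmod (f i))\<^sup>2"] by simp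

lemma cinner_self: "cinner f f = complex_of_real ((l2norm f)\<^sup>2)"
proof -
  have e: "cnj (f i) * f i = complex_of_real ((cmod (f i))\<^sup>2)" for i
    by (metis complex_norm_square mult.commute)
  have "cinner f f = (\<Sum>\<^sub>\<infinity>i. complex_of_real ((cmod (f i))\<^sup>2))"
    unfolding cinner_def e by (rule refl)
  also have "\<dots> = complex_of_real (\<Sum>\<^sub>\<infinity>i. (cmod (f i))\<^sup>2)"
  proof (cases "(\<lambda>i. (cmod (f i))\<^sup>2) summable_on UNIV")
    case True thus ?thesis using has_sum_of_real[OF has_sum_infsum[OF True]] infsumI by blast
  next
    case False
    hence "\<not> (\<lambda>i. complex_of_real ((cmod (f i))\<^sup>2)) summable_on UNIV"
      using summable_on_Re[of "\<lambda>i. complex_of_real ((cmod (f i))\<^sup>2)" UNIV] by auto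
    thus ?thesis using False infsum_not_exists by (metis of_real_0)
  qed
  finally show ?thesis by (simp add: l2norm_sq)
qed

lemma cinner_self_zero:
  assumes "f \<in> l2" "cinner f f = 0" shows "f = 0"
proof
  fix i
  have "(\<Sum>\<^sub>\<infinity>i. (cmod (f i))\<^sup>2) = 0" using assms(2) cinner_self[of f] l2norm_sq[of f] by simp
  hence "(cmod (f i))\<^sup>2 = 0"
    by (intro nonneg_infsum_le_0D[of _ UNIV]) (auto simp: l2_sum_sq assms)
  thus "f i = 0 i" by simp
qed

lemma l2norm_zero_iff: "f \<in> l2 \<Longrightarrow> l2norm f = 0 \<longleftrightarrow> f = 0"
  using cinner_self_zero[of f] cinner_self[of f] by (auto simp: l2norm_def)


interpretation fv: vector_space "sc :: complex \<Rightarrow> ('i \<Rightarrow> complex) \<Rightarrow> ('i \<Rightarrow> complex)"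
  by unfold_locales (auto simp: sc_def fun_eq_iff algebra_simps)

lemma sum_fun_apply: "(sum g A) x = (\<Sum>a\<in>A. g a x)"
  by (induction A rule: infinite_finite_induct) auto

lemma sum_sc_apply: "(\<Sum>v\<in>B. sc (u v) (v::'i \<Rightarrow> complex)) = (\<lambda>i. \<Sum>v\<in>B. u v * v i)"
  by (auto simp: sum_fun_apply)

lemma indep_fin_iff:
  assumes "finite B"
  shows "fv.independent B \<longleftrightarrow> (\<forall>u. (\<Sum>v\<in>B. sc (u v) v) = 0 \<longrightarrow> (\<forall>v\<in>B. u v = 0))"
proof
  assume "fv.independent B" thus "\<forall>u. (\<Sum>v\<in>B. sc (u v) v) = 0 \<longrightarrow> (\<forall>v\<in>B. u v = 0)"
    using fv.independentD[of B B] assms by blast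
next
  assume H: "\<forall>u. (\<Sum>v\<in>B. sc (u v) v) = 0 \<longrightarrow> (\<forall>v\<in>B. u v = 0)"
  show "fv.independent B" unfolding fv.independent_explicit_module
  proof (intro allI impI)
    fix t u v assume t: "finite t" "t \<subseteq> B" "(\<Sum>v\<in>t. sc (u v) v) = 0" "v \<in> t"
    define u' where "u' = (\<lambda>v. if v \<in> t then u v else 0)"
    have "(\<Sum>v\<in>B. sc (u' v) v) = (\<Sum>v\<in>t. sc (u' v) v)"
      using t assms by (intro sum.mono_neutral_right) (auto simp: u'_def sc_def fun_eq_iff)
    also have "\<dots> = (\<Sum>v\<in>t. sc (u v) v)" by (intro sum.cong) (auto simp: u'_def)
    finally have "u' v = 0" using H t by auto
    thus "u v = 0" using t by (simp add: u'_def)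
  qed
qed

lemma cindep_iff: "finite B \<Longrightarrow> cindep B \<longleftrightarrow> fv.independent B"
  unfolding indep_fin_iff cindep_def sum_sc_apply zero_fun_def by simp

lemma cdim_alt: "cdim S = (SUP B\<in>{B. finite B \<and> B \<subseteq> S \<and> fv.independent B}. enat (card B))"
  unfolding cdim_def by (rule SUP_cong) (auto simp: cindep_iff)

lemma cdim_ge: "finite B \<Longrightarrow> B \<subseteq> S \<Longrightarrow> fv.independent B \<Longrightarrow> enat (card B) \<le> cdim S"
  unfolding cdim_alt by (rule SUP_upper) auto

lemma cdim_le_span: "finite W \<Longrightarrow> S \<subseteq> fv.span W \<Longrightarrow> cdim S \<le> enat (card W)"
  unfolding cdim_alt
proof (rule SUP_least)
  fix B assume "finite W" "S \<subseteq> fv.span W" "B \<in> {B. finite B \<and> B \<subseteq> S \<and> fv.independent B}"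
  thus "enat (card B) \<le> enat (card W)"
    using fv.independent_span_bound[of W B] by auto
qed

lemma cdim_mono: "S \<subseteq> T \<Longrightarrow> cdim S \<le> cdim T"
  unfolding cdim_alt by (rule SUP_subset_mono) auto

lemma cdim_basis:
  assumes "cdim S \<noteq> \<infinity>"
  shows "\<exists>B. finite B \<and> B \<subseteq> S \<and> fv.independent B \<and> S \<subseteq> fv.span B \<and> cdim S = enat (card B)"
proof -
  obtain n where n: "cdim S = enat n" using assms by (cases "cdim S") auto
  define F where "F = {B. finite B \<and> B \<subseteq> S \<and> fv.independent B}"
  define N where "N = card ` F"
  have Nle: "k \<le> n" if "k \<in> N" for k
    using that cdim_ge[of _ S] n unfolding N_def F_def by fastforce
  have finN: "finite N" using Nle by (meson finite_nat_set_iff_bounded_le)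
  have "{} \<in> F" by (auto simp: F_def fv.independent_empty)
  hence "0 \<in> N" unfolding N_def by force
  hence "Max N \<in> N" using finN by (intro Max_in) auto
  then obtain B where B: "B \<in> F" "card B = Max N" unfolding N_def by auto
  have maxB: "card B' \<le> card B" if "B' \<in> F" for B'
    using that finN B by (auto simp: N_def)
  have span: "S \<subseteq> fv.span B"
  proof
    fix x assume x: "x \<in> S"
    show "x \<in> fv.span B"
    proof (rule ccontr)
      assume nx: "x \<notin> fv.span B"
      hence "insert x B \<in> F" using B x fv.independent_insertI unfolding F_def by auto
      moreover have "x \<notin> B" using nx fv.span_base by blast
      ultimately have "card B + 1 \<le> card B" using maxB[of "insert x B"] B by (auto simp: F_def)
      thus False by simp
    qed
  qed
  have "cdim S = enat (card B)"
  proof (rule antisym)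
    show "cdim S \<le> enat (card B)" using cdim_le_span[OF _ span] B by (auto simp: F_def)
    show "enat (card B) \<le> cdim S" using B(1) unfolding F_def by (auto intro: cdim_ge)
  qed
  thus ?thesis using B span by (auto simp: F_def)
qed

lemma cdim_finite_iff: "cdim S \<noteq> \<infinity> \<longleftrightarrow> (\<exists>W. finite W \<and> S \<subseteq> fv.span W)"
proof
  assume "cdim S \<noteq> \<infinity>" thus "\<exists>W. finite W \<and> S \<subseteq> fv.span W" using cdim_basis by blast
next
  assume "\<exists>W. finite W \<and> S \<subseteq> fv.span W"
  then obtain W where "finite W" "S \<subseteq> fv.span W" by blast
  hence "cdim S \<le> enat (card W)" using cdim_le_span[of W S] by auto
  thus "cdim S \<noteq> \<infinity>" by (cases "cdim S") auto
qed

definition linon :: "(('i \<Rightarrow> complex) \<Rightarrow> ('i \<Rightarrow> complex)) \<Rightarrow> ('i \<Rightarrow> complex) set \<Rightarrow> bool" where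
  "linon f U \<longleftrightarrow> (\<forall>x\<in>U. \<forall>y\<in>U. f (x + y) = f x + f y) \<and> (\<forall>x\<in>U. \<forall>c. f (sc c x) = sc c (f x))"

lemma linon_add: "linon f U \<Longrightarrow> x \<in> U \<Longrightarrow> y \<in> U \<Longrightarrow> f (x + y) = f x + f y"
  by (simp add: linon_def)

lemma linon_sc: "linon f U \<Longrightarrow> x \<in> U \<Longrightarrow> f (sc c x) = sc c (f x)"
  by (simp add: linon_def)

lemma linon_zero: "linon f U \<Longrightarrow> fv.subspace U \<Longrightarrow> f 0 = 0"
  using linon_sc[of f U 0 0] fv.subspace_0[of U] by simp

lemma linon_neg: "linon f U \<Longrightarrow> x \<in> U \<Longrightarrow> f (- x) = - f x"
  using linon_sc[of f U x "-1"] by (simp add: sc_def fun_eq_iff fun_Compl_def)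

lemma linon_diff: "linon f U \<Longrightarrow> fv.subspace U \<Longrightarrow> x \<in> U \<Longrightarrow> y \<in> U \<Longrightarrow> f (x - y) = f x - f y"
  using linon_add[of f U x "- y"] linon_neg[of f U y] fv.subspace_neg[of U y] by simp

lemma linon_sum:
  assumes "linon f U" "fv.subspace U" "\<And>b. b \<in> B \<Longrightarrow> g b \<in> U"
  shows "f (\<Sum>b\<in>B. sc (c b) (g b)) = (\<Sum>b\<in>B. sc (c b) (f (g b)))"
  using assms(3)
proof (induction B rule: infinite_finite_induct)
  case (infinite A)
  have "(\<Sum>b\<in>A. sc (c b) (g b)) = 0" "(\<Sum>b\<in>A. sc (c b) (f (g b))) = 0" using infinite by simp_all
  thus ?case using linon_zero[OF assms(1,2)] by metis
next
  case empty show ?case using linon_zero[OF assms(1,2)] by (simp only: sum.empty)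
next
  case (insert x F)
  have "(\<Sum>b\<in>F. sc (c b) (g b)) \<in> U" using insert assms(2) by (intro fv.subspace_sum) (auto intro: fv.subspace_scale)
  moreover have "sc (c x) (g x) \<in> U" using insert assms(2) by (auto intro: fv.subspace_scale)
  ultimately have "f (sc (c x) (g x) + (\<Sum>b\<in>F. sc (c b) (g b))) = f (sc (c x) (g x)) + f (\<Sum>b\<in>F. sc (c b) (g b))"
    by (metis linon_add[OF assms(1)])
  also have "f (sc (c x) (g x)) = sc (c x) (f (g x))"
    using insert.prems by (intro linon_sc[OF assms(1)]) simp
  also have "f (\<Sum>b\<in>F. sc (c b) (g b)) = (\<Sum>b\<in>F. sc (c b) (f (g b)))"
    using insert.IH insert.prems by blast
  finally show ?case by (simp only: sum.insert[OF insert.hyps])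
qed

lemma linon_subset: "linon f U \<Longrightarrow> V \<subseteq> U \<Longrightarrow> linon f V"
  unfolding linon_def by blast

lemma subspace_image:
  assumes "linon f U" "fv.subspace U" shows "fv.subspace (f ` U)"
proof (rule fv.subspaceI)
  show "0 \<in> f ` U" using linon_zero[OF assms] fv.subspace_0[OF assms(2)] by force
  show "x + y \<in> f ` U" if "x \<in> f ` U" "y \<in> f ` U" for x y
    using that linon_add[OF assms(1)] fv.subspace_add[OF assms(2)] by (smt (verit) image_iff)
  show "sc c x \<in> f ` U" if "x \<in> f ` U" for c x
    using that linon_sc[OF assms(1)] fv.subspace_scale[OF assms(2)] by (smt (verit) image_iff)
qed

lemma subspace_kernel:
  assumes "linon f U" "fv.subspace U" shows "fv.subspace {x\<in>U. f x = 0}"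
proof (rule fv.subspaceI)
  show "0 \<in> {x\<in>U. f x = 0}" using linon_zero[OF assms] fv.subspace_0[OF assms(2)] by force
  show "x + y \<in> {x\<in>U. f x = 0}" if "x \<in> {x\<in>U. f x = 0}" "y \<in> {x\<in>U. f x = 0}" for x y
    using that linon_add[OF assms(1)] fv.subspace_add[OF assms(2)] by auto
  show "sc c x \<in> {x\<in>U. f x = 0}" if "x \<in> {x\<in>U. f x = 0}" for c x
    using that linon_sc[OF assms(1)] fv.subspace_scale[OF assms(2)] by (auto simp: sc_def zero_fun_def)
qed

lemma cdim_image_le:
  assumes lin: "linon f U" and sub: "fv.subspace U"
  shows "cdim (f ` U) \<le> cdim U"
  unfolding cdim_alt[of "f ` U"]
proof (rule SUP_least)
  fix B assume "B \<in> {B. finite B \<and> B \<subseteq> f ` U \<and> fv.independent B}"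
  hence B: "finite B" "B \<subseteq> f ` U" "fv.independent B" by auto
  obtain g where g: "\<And>b. b \<in> B \<Longrightarrow> g b \<in> U \<and> f (g b) = b"
    using B(2) by (metis f_inv_into_f inv_into_into subset_iff)
  have inj: "inj_on g B" using g by (metis inj_onI)
  have ind: "fv.independent (g ` B)"
    unfolding indep_fin_iff[OF finite_imageI[OF B(1)]]
  proof (intro allI impI ballI)
    fix u y assume H: "(\<Sum>v\<in>g ` B. sc (u v) v) = 0" "y \<in> g ` B"
    have "(\<Sum>b\<in>B. sc (u (g b)) (g b)) = 0" using H(1) by (simp add: sum.reindex[OF inj])
    hence "f (\<Sum>b\<in>B. sc (u (g b)) (g b)) = 0" using linon_zero[OF lin sub] by simp
    hence Z: "(\<Sum>b\<in>B. sc (u (g b)) b) = 0" using linon_sum[OF lin sub, of B g "\<lambda>b. u (g b)"] g by simp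
    from B(3) have A: "\<forall>c. (\<Sum>v\<in>B. sc (c v) v) = 0 \<longrightarrow> (\<forall>v\<in>B. c v = 0)"
      by (simp add: indep_fin_iff[OF B(1)])
    have "\<forall>b\<in>B. u (g b) = 0" using spec[OF A, of "\<lambda>b. u (g b)"] Z by simp
    thus "u y = 0" using H(2) by auto
  qed
  have "enat (card (g ` B)) \<le> cdim U"
    using cdim_ge[of "g ` B" U] ind g B(1) by auto
  thus "enat (card B) \<le> cdim U" by (simp add: card_image[OF inj])
qed

lemma cdim_image_inj:
  assumes lin: "linon f U" and sub: "fv.subspace U" and inj: "inj_on f U"
  shows "cdim (f ` U) = cdim U"
proof (rule antisym)
  show "cdim (f ` U) \<le> cdim U" by (rule cdim_image_le[OF lin sub])
  show "cdim U \<le> cdim (f ` U)"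
    unfolding cdim_alt[of U]
  proof (rule SUP_least)
    fix B assume "B \<in> {B. finite B \<and> B \<subseteq> U \<and> fv.independent B}"
    hence B: "finite B" "B \<subseteq> U" "fv.independent B" by auto
    have injB: "inj_on f B" using inj B(2) inj_on_subset by blast
    have ind: "fv.independent (f ` B)"
      unfolding indep_fin_iff[OF finite_imageI[OF B(1)]]
    proof (intro allI impI ballI)
      fix u y assume H: "(\<Sum>v\<in>f ` B. sc (u v) v) = 0" "y \<in> f ` B"
      have "(\<Sum>b\<in>B. sc (u (f b)) (f b)) = 0" using H(1) by (simp add: sum.reindex[OF injB])
      hence "f (\<Sum>b\<in>B. sc (u (f b)) b) = f 0"
        using linon_sum[OF lin sub, of B "\<lambda>b. b" "\<lambda>b. u (f b)"] B linon_zero[OF lin sub] by auto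
      moreover have "(\<Sum>b\<in>B. sc (u (f b)) b) \<in> U"
        using B sub by (intro fv.subspace_sum) (auto intro: fv.subspace_scale)
      ultimately have "(\<Sum>b\<in>B. sc (u (f b)) b) = 0"
        using inj fv.subspace_0[OF sub] by (meson inj_onD)
      moreover from B(3) have "\<forall>c. (\<Sum>v\<in>B. sc (c v) v) = 0 \<longrightarrow> (\<forall>v\<in>B. c v = 0)"
        by (simp add: indep_fin_iff[OF B(1)])
      ultimately have "\<forall>b\<in>B. u (f b) = 0" using spec[of _ "\<lambda>b. u (f b)"] by blast
      thus "u y = 0" using H(2) by auto
    qed
    have "enat (card (f ` B)) \<le> cdim (f ` U)"
      using cdim_ge[of "f ` B" "f ` U"] ind B by auto
    thus "enat (card B) \<le> cdim (f ` U)" by (simp add: card_image[OF injB])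
  qed
qed

lemma cdim_sum_le:
  "cdim {x + y | x y. x \<in> A \<and> y \<in> B} \<le> cdim A + cdim B"
proof (cases "cdim A = \<infinity> \<or> cdim B = \<infinity>")
  case True thus ?thesis by auto
next
  case False
  then obtain WA WB where W: "finite WA" "A \<subseteq> fv.span WA" "cdim A = enat (card WA)"
    "finite WB" "B \<subseteq> fv.span WB" "cdim B = enat (card WB)"
    using cdim_basis by meson
  have "{x + y | x y. x \<in> A \<and> y \<in> B} \<subseteq> fv.span (WA \<union> WB)"
  proof safe
    fix x y assume "x \<in> A" "y \<in> B"
    hence "x \<in> fv.span (WA \<union> WB)" "y \<in> fv.span (WA \<union> WB)"
      using W fv.span_mono[of WA "WA \<union> WB"] fv.span_mono[of WB "WA \<union> WB"] by auto
    thus "x + y \<in> fv.span (WA \<union> WB)" by (rule fv.span_add)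
  qed
  hence "cdim {x + y | x y. x \<in> A \<and> y \<in> B} \<le> enat (card (WA \<union> WB))"
    using W by (intro cdim_le_span) auto
  also have "\<dots> \<le> enat (card WA + card WB)" by (simp add: card_Un_le)
  finally show ?thesis using W by simp
qed

lemma cdim_direct_ge:
  assumes A: "fv.subspace A" and B: "fv.subspace B" and AB: "A \<inter> B \<subseteq> {0}"
    and U: "A \<subseteq> U" "B \<subseteq> U"
  shows "cdim A + cdim B \<le> cdim U"
proof (cases "cdim A = \<infinity> \<or> cdim B = \<infinity>")
  case True
  hence "cdim U = \<infinity>" using cdim_mono[OF U(1)] cdim_mono[OF U(2)] by auto
  thus ?thesis by simp
next
  case False
  then obtain BA BB where W: "finite BA" "BA \<subseteq> A" "fv.independent BA" "cdim A = enat (card BA)"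
    "finite BB" "BB \<subseteq> B" "fv.independent BB" "cdim B = enat (card BB)"
    using cdim_basis by meson
  have disj: "BA \<inter> BB = {}"
  proof -
    have "BA \<inter> BB \<subseteq> {0}" using W AB by auto
    moreover have "0 \<notin> BA" using W(3) fv.dependent_zero by blast
    ultimately show ?thesis by auto
  qed
  have ind: "fv.independent (BA \<union> BB)"
    unfolding indep_fin_iff[OF finite_UnI[OF W(1) W(5)]]
  proof (intro allI impI ballI)
    fix u v assume H: "(\<Sum>v\<in>BA \<union> BB. sc (u v) v) = 0" "v \<in> BA \<union> BB"
    define a where "a = (\<Sum>v\<in>BA. sc (u v) v)"
    define b where "b = (\<Sum>v\<in>BB. sc (u v) v)"
    have "a + b = (\<Sum>v\<in>BA \<union> BB. sc (u v) v)" unfolding a_def b_def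
      by (rule sum.union_disjoint[symmetric, OF W(1) W(5) disj])
    hence ab: "a + b = 0" using H(1) by simp
    have aA: "a \<in> A" unfolding a_def using W A by (intro fv.subspace_sum) (auto intro: fv.subspace_scale)
    have bB: "b \<in> B" unfolding b_def using W B by (intro fv.subspace_sum) (auto intro: fv.subspace_scale)
    have "a = - b" using ab by (simp add: eq_neg_iff_add_eq_0)
    hence "a \<in> B" using bB fv.subspace_neg[OF B] by simp
    hence "a = 0" using aA AB by auto
    hence "b = 0" using ab by simp
    show "u v = 0"
      using H(2) \<open>a = 0\<close> \<open>b = 0\<close> W(3,7) unfolding a_def b_def indep_fin_iff[OF W(1)] indep_fin_iff[OF W(5)]
      by blast
  qed
  have "BA \<union> BB \<subseteq> U" using W U by auto
  hence "enat (card (BA \<union> BB)) \<le> cdim U"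
    using cdim_ge[OF finite_UnI[OF W(1) W(5)] _ ind] by blast
  thus ?thesis using W card_Un_disjoint[OF W(1) W(5) disj] by simp
qed

lemma cdim_rank_nullity_le:
  assumes lin: "linon f U" and sub: "fv.subspace U"
  shows "cdim U \<le> cdim (f ` U) + cdim {x\<in>U. f x = 0}"
proof (cases "cdim (f ` U) = \<infinity> \<or> cdim {x\<in>U. f x = 0} = \<infinity>")
  case True thus ?thesis by auto
next
  case False
  then obtain W1 W2 where W: "finite W1" "W1 \<subseteq> f ` U" "f ` U \<subseteq> fv.span W1" "cdim (f ` U) = enat (card W1)"
    "finite W2" "W2 \<subseteq> {x\<in>U. f x = 0}" "{x\<in>U. f x = 0} \<subseteq> fv.span W2" "cdim {x\<in>U. f x = 0} = enat (card W2)"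
    using cdim_basis by meson
  obtain g where g: "\<And>b. b \<in> W1 \<Longrightarrow> g b \<in> U \<and> f (g b) = b"
    using W(2) by (metis f_inv_into_f inv_into_into subset_iff)
  have "U \<subseteq> fv.span (g ` W1 \<union> W2)"
  proof
    fix x assume x: "x \<in> U"
    hence "f x \<in> fv.span W1" using W by auto
    then obtain c where c: "f x = (\<Sum>w\<in>W1. sc (c w) w)" using fv.span_finite[OF W(1)] by auto
    define v where "v = (\<Sum>w\<in>W1. sc (c w) (g w))"
    have vU: "v \<in> U" unfolding v_def using g sub by (intro fv.subspace_sum) (auto intro: fv.subspace_scale)
    have fv: "f v = f x" unfolding v_def c using linon_sum[OF lin sub, of W1 g c] g by simp
    have "x - v \<in> {x\<in>U. f x = 0}" using linon_diff[OF lin sub x vU] fv x vU fv.subspace_diff[OF sub] by auto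
    hence "x - v \<in> fv.span (g ` W1 \<union> W2)" using W(7) fv.span_mono[of W2 "g ` W1 \<union> W2"] by auto
    moreover have "v \<in> fv.span (g ` W1 \<union> W2)" unfolding v_def
      by (intro fv.span_sum fv.span_scale fv.span_base) auto
    ultimately have "(x - v) + v \<in> fv.span (g ` W1 \<union> W2)" by (rule fv.span_add)
    thus "x \<in> fv.span (g ` W1 \<union> W2)" by simp
  qed
  hence "cdim U \<le> enat (card (g ` W1 \<union> W2))" using W by (intro cdim_le_span) auto
  also have "\<dots> \<le> enat (card W1 + card W2)"
    using card_Un_le[of "g ` W1" W2] card_image_le[OF W(1), of g] by simp
  finally show ?thesis using W by simp
qed

lemma endo_inj_surj:
  assumes lin: "linon f N" and sub: "fv.subspace N" and into: "f ` N \<subseteq> N"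
    and inj: "inj_on f N" and fin: "cdim N \<noteq> \<infinity>"
  shows "f ` N = N"
proof (rule ccontr)
  assume "f ` N \<noteq> N"
  then obtain x where x: "x \<in> N" "x \<notin> f ` N" using into by blast
  have eq: "cdim (f ` N) = cdim N" by (rule cdim_image_inj[OF lin sub inj])
  hence "cdim (f ` N) \<noteq> \<infinity>" using fin by simp
  then obtain B where B: "finite B" "B \<subseteq> f ` N" "fv.independent B" "cdim (f ` N) = enat (card B)"
    using cdim_basis by meson
  have "fv.span B \<subseteq> f ` N" using B(2) subspace_image[OF lin sub] by (rule fv.span_minimal)
  hence "x \<notin> fv.span B" using x by auto
  hence ind: "fv.independent (insert x B)" using B(3) fv.independent_insertI by blast
  have "x \<notin> B" using x B by auto
  have "enat (card (insert x B)) \<le> cdim N" using cdim_ge[OF _ _ ind] B x into by auto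
  hence "enat (card B + 1) \<le> enat (card B)" using eq B \<open>x \<notin> B\<close> by simp
  thus False by simp
qed

lemma subspace_l2: "fv.subspace l2"
  by (rule fv.subspaceI) auto


declare sc_apply[simp del]

lemma bop_l2: "bounded_op T \<Longrightarrow> f \<in> l2 \<Longrightarrow> T f \<in> l2"
  by (simp add: bounded_op_def)

lemma bop_linon: fixes T :: "('i::countable \<Rightarrow> complex) \<Rightarrow> ('i \<Rightarrow> complex)"
  assumes "bounded_op T" shows "linon T l2"
proof -
  have L: "\<And>f g a b. f \<in> l2 \<Longrightarrow> g \<in> l2 \<Longrightarrow> T (\<lambda>i. a * f i + b * g i) = (\<lambda>i. a * T f i + b * T g i)"
    using assms by (simp add: bounded_op_def)
  show ?thesis unfolding linon_def
  proof (intro conjI ballI allI)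
    fix x y :: "'i \<Rightarrow> complex" assume "x \<in> l2" "y \<in> l2"
    from L[OF this, of 1 1] show "T (x + y) = T x + T y" by (simp add: plus_fun_def)
  next
    fix x :: "'i \<Rightarrow> complex" and c assume "x \<in> l2"
    from L[OF this this, of c 0] show "T (sc c x) = sc c (T x)" by (simp add: sc_def)
  qed
qed

lemma bop_bound: fixes T :: "('i::countable \<Rightarrow> complex) \<Rightarrow> ('i \<Rightarrow> complex)"
  assumes "bounded_op T" shows "\<exists>K\<ge>0. \<forall>f\<in>l2. l2norm (T f) \<le> K * l2norm f"
proof -
  obtain K where K: "\<forall>f\<in>l2. l2norm (T f) \<le> K * l2norm f" using assms by (auto simp: bounded_op_def)
  have "\<forall>f\<in>l2. l2norm (T f) \<le> max K 0 * l2norm f"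
  proof
    fix f :: "'i \<Rightarrow> complex" assume "f \<in> l2"
    hence "l2norm (T f) \<le> K * l2norm f" using K by auto
    also have "\<dots> \<le> max K 0 * l2norm f" by (intro mult_right_mono) auto
    finally show "l2norm (T f) \<le> max K 0 * l2norm f" .
  qed
  thus ?thesis by (intro exI[of _ "max K 0"]) auto
qed

lemma cinner_abs_summable:
  assumes "f \<in> l2" "g \<in> l2"
  shows "(\<lambda>i. cmod (f i) * cmod (g i)) summable_on UNIV"
  using summable_on_iff_abs_summable_on_complex[THEN iffD1, OF cinner_summable[OF assms]]
  by (simp add: norm_mult)

lemma cauchy_schwarz:
  assumes f: "f \<in> l2" and g: "g \<in> l2"
  shows "cmod (cinner f g) \<le> l2norm f * l2norm g"
proof (cases "l2norm f = 0 \<or> l2norm g = 0")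
  case True
  hence "f = 0 \<or> g = 0" using l2norm_zero_iff f g by blast
  thus ?thesis by auto
next
  case False
  define A where "A = (l2norm f)\<^sup>2"
  define B where "B = (l2norm g)\<^sup>2"
  have A: "A > 0" "B > 0" using False by (auto simp: A_def B_def)
  define t where "t = sqrt (B / A)"
  have t: "t > 0" using A by (simp add: t_def)
  have "cmod (cinner f g) \<le> (\<Sum>\<^sub>\<infinity>i. cmod (cnj (f i) * g i))"
    unfolding cinner_def
    using summable_on_iff_abs_summable_on_complex[THEN iffD1, OF cinner_summable[OF f g]]
    by (intro norm_infsum_bound) auto
  also have "\<dots> = (\<Sum>\<^sub>\<infinity>i. cmod (f i) * cmod (g i))" by (simp add: norm_mult)
  also have "\<dots> \<le> (\<Sum>\<^sub>\<infinity>i. (t/2) * (cmod (f i))\<^sup>2 + (1/(2*t)) * (cmod (g i))\<^sup>2)"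
  proof (rule infsum_mono)
    show "(\<lambda>i. cmod (f i) * cmod (g i)) summable_on UNIV" by (rule cinner_abs_summable[OF f g])
    show "(\<lambda>i. (t/2) * (cmod (f i))\<^sup>2 + (1/(2*t)) * (cmod (g i))\<^sup>2) summable_on UNIV"
      using f g unfolding l2_def by (intro summable_on_add summable_on_cmult_right) auto
    fix i
    have "0 \<le> (t * cmod (f i) - cmod (g i))\<^sup>2" by simp
    hence "2 * t * (cmod (f i) * cmod (g i)) \<le> t\<^sup>2 * (cmod (f i))\<^sup>2 + (cmod (g i))\<^sup>2"
      by (simp add: power2_diff power_mult_distrib algebra_simps)
    hence "cmod (f i) * cmod (g i) \<le> (t\<^sup>2 * (cmod (f i))\<^sup>2 + (cmod (g i))\<^sup>2) / (2*t)"
      using t by (simp add: field_simps)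
    also have "\<dots> = (t/2) * (cmod (f i))\<^sup>2 + (1/(2*t)) * (cmod (g i))\<^sup>2"
      using t by (simp add: field_simps power2_eq_square)
    finally show "cmod (f i) * cmod (g i) \<le> (t/2) * (cmod (f i))\<^sup>2 + (1/(2*t)) * (cmod (g i))\<^sup>2" .
  qed
  also have "\<dots> = (t/2) * A + (1/(2*t)) * B"
  proof -
    have s1: "(\<lambda>i. (t/2) * (cmod (f i))\<^sup>2) summable_on UNIV"
      using f unfolding l2_def by (intro summable_on_cmult_right) auto
    have s2: "(\<lambda>i. (1/(2*t)) * (cmod (g i))\<^sup>2) summable_on UNIV"
      using g unfolding l2_def by (intro summable_on_cmult_right) auto
    show ?thesis by (simp only: infsum_add[OF s1 s2] infsum_cmult_right' A_def B_def l2norm_sq)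
  qed
  also have "\<dots> = sqrt A * sqrt B"
  proof -
    have sA: "sqrt A * sqrt A = A" "sqrt B * sqrt B = B" using A by simp_all
    have sp: "sqrt A > 0" using A by simp
    have tt: "t = sqrt B / sqrt A" by (simp add: t_def real_sqrt_divide)
    have "t * A = sqrt A * sqrt B" unfolding tt using sp
      by (metis sA(1) nonzero_mult_div_cancel_left order_less_irrefl times_divide_eq_left mult.commute)
    moreover have "B / t = sqrt A * sqrt B" unfolding tt using sp A
      by (metis sA(2) divide_divide_eq_right mult.commute nonzero_mult_div_cancel_left order_less_irrefl real_sqrt_gt_0_iff)
    ultimately show ?thesis using t by (simp add: field_simps)
  qed
  also have "\<dots> = l2norm f * l2norm g" by (simp add: A_def B_def)
  finally show ?thesis .
qed

lemma l2_sum: "(\<And>i. i \<in> F \<Longrightarrow> u i \<in> l2) \<Longrightarrow> (\<Sum>i\<in>F. sc (c i) (u i)) \<in> l2"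
  using subspace_l2 by (intro fv.subspace_sum) (auto intro: fv.subspace_scale)

lemma cinner_sum_left:
  assumes "\<And>i. i \<in> F \<Longrightarrow> u i \<in> l2" "g \<in> l2"
  shows "cinner (\<Sum>i\<in>F. sc (c i) (u i)) g = (\<Sum>i\<in>F. cnj (c i) * cinner (u i) g)"
  using assms(1)
proof (induction F rule: infinite_finite_induct)
  case (infinite A)
  have "(\<Sum>i\<in>A. sc (c i) (u i)) = 0" "(\<Sum>i\<in>A. cnj (c i) * cinner (u i) g) = 0"
    using infinite.hyps by simp_all
  thus ?case by (metis cinner_zero_left)
next
  case empty thus ?case by (simp only: sum.empty cinner_zero_left)
next
  case (insert x F)
  have "cinner (\<Sum>i\<in>insert x F. sc (c i) (u i)) g = cinner (sc (c x) (u x) + (\<Sum>i\<in>F. sc (c i) (u i))) g"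
    by (simp only: sum.insert[OF insert.hyps])
  also have "\<dots> = cinner (sc (c x) (u x)) g + cinner (\<Sum>i\<in>F. sc (c i) (u i)) g"
    using insert.prems assms(2) by (intro cinner_add_left) (auto intro!: l2_sum)
  also have "\<dots> = cnj (c x) * cinner (u x) g + (\<Sum>i\<in>F. cnj (c i) * cinner (u i) g)"
    using insert by (simp add: cinner_sc_left)
  finally show ?case by (simp only: sum.insert[OF insert.hyps])
qed

definition delta :: "'i \<Rightarrow> 'i \<Rightarrow> complex" where
  "delta i = (\<lambda>j. if j = i then 1 else 0)"

lemma delta_l2: "delta i \<in> (l2 :: ('i::countable \<Rightarrow> complex) set)"
  unfolding l2_def delta_def
  by (auto intro!: finite_nonzero_values_imp_summable_on)

definition trunc :: "'i set \<Rightarrow> ('i \<Rightarrow> complex) \<Rightarrow> ('i \<Rightarrow> complex)" where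
  "trunc F f = (\<lambda>j. if j \<in> F then f j else 0)"

lemma trunc_sum: "finite F \<Longrightarrow> trunc F f = (\<Sum>i\<in>F. sc (f i) (delta i))"
  by (auto simp: trunc_def sum_fun_apply delta_def fun_eq_iff if_distrib sum.If_cases sc_apply)

lemma trunc_l2: "finite F \<Longrightarrow> trunc F f \<in> (l2 :: ('i::countable \<Rightarrow> complex) set)"
  by (simp add: trunc_sum l2_sum delta_l2)

lemma infsum_trunc_sq:
  assumes "finite F"
  shows "(\<Sum>\<^sub>\<infinity>i. (cmod (trunc F f i))\<^sup>2) = (\<Sum>i\<in>F. (cmod (f i))\<^sup>2)"
proof -
  have "(\<Sum>\<^sub>\<infinity>i. (cmod (trunc F f i))\<^sup>2) = (\<Sum>\<^sub>\<infinity>i\<in>F. (cmod (f i))\<^sup>2)"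
    by (rule infsum_cong_neutral) (auto simp: trunc_def)
  also have "\<dots> = (\<Sum>i\<in>F. (cmod (f i))\<^sup>2)" using assms by simp
  finally show ?thesis .
qed

lemma l2norm_trunc: "finite F \<Longrightarrow> (l2norm (trunc F f))\<^sup>2 = (\<Sum>i\<in>F. (cmod (f i))\<^sup>2)"
  by (simp add: l2norm_sq infsum_trunc_sq)

lemma bop_sum:
  assumes "bounded_op T" "\<And>i. i \<in> F \<Longrightarrow> u i \<in> l2"
  shows "T (\<Sum>i\<in>F. sc (c i) (u i)) = (\<Sum>i\<in>F. sc (c i) (T (u i)))"
  using linon_sum[OF bop_linon[OF assms(1)] subspace_l2, of F u c] assms(2) by simp

definition adjc :: "(('i::countable \<Rightarrow> complex) \<Rightarrow> ('i \<Rightarrow> complex)) \<Rightarrow> ('i \<Rightarrow> complex) \<Rightarrow> ('i \<Rightarrow> complex)" where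
  "adjc T g = (\<lambda>i. cinner (T (delta i)) g)"

lemma cinner_T_trunc:
  fixes T :: "('i::countable \<Rightarrow> complex) \<Rightarrow> ('i \<Rightarrow> complex)"
  assumes T: "bounded_op T" and F: "finite F" and g: "g \<in> l2"
  shows "cinner (T (trunc F f)) g = (\<Sum>i\<in>F. cnj (f i) * adjc T g i)"
proof -
  have "T (trunc F f) = (\<Sum>i\<in>F. sc (f i) (T (delta i)))"
    using bop_sum[OF T delta_l2, where F=F and c=f] trunc_sum[OF F] by simp
  hence "cinner (T (trunc F f)) g = (\<Sum>i\<in>F. cnj (f i) * cinner (T (delta i)) g)"
    using cinner_sum_left[where F=F and c=f, OF bop_l2[OF T delta_l2] g] by simp
  thus ?thesis by (simp add: adjc_def)
qed

lemma adjc_l2: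
  fixes T :: "('i::countable \<Rightarrow> complex) \<Rightarrow> ('i \<Rightarrow> complex)"
  assumes T: "bounded_op T" and K: "K \<ge> 0" "\<forall>f\<in>l2. l2norm (T f) \<le> K * l2norm f" and g: "g \<in> l2"
  shows "adjc T g \<in> l2" "l2norm (adjc T g) \<le> K * l2norm g"
proof -
  let ?a = "adjc T g"
  have bound: "(\<Sum>i\<in>F. (cmod (?a i))\<^sup>2) \<le> (K * l2norm g)\<^sup>2" if F: "finite F" for F
  proof -
    define s where "s = (\<Sum>i\<in>F. (cmod (?a i))\<^sup>2)"
    have s0: "s \<ge> 0" unfolding s_def by (intro sum_nonneg) auto
    have "cinner (T (trunc F ?a)) g = (\<Sum>i\<in>F. cnj (?a i) * ?a i)"
      by (rule cinner_T_trunc[OF T F g])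
    also have "\<dots> = (\<Sum>i\<in>F. complex_of_real ((cmod (?a i))\<^sup>2))"
      by (rule sum.cong) (simp, metis complex_norm_square mult.commute)
    also have "\<dots> = complex_of_real s"
      unfolding s_def by (rule of_real_sum[symmetric])
    finally have eq: "cinner (T (trunc F ?a)) g = complex_of_real s" .
    have "s = cmod (cinner (T (trunc F ?a)) g)" using eq s0 by simp
    also have "\<dots> \<le> l2norm (T (trunc F ?a)) * l2norm g"
      by (rule cauchy_schwarz[OF bop_l2[OF T trunc_l2[OF F]] g])
    also have "\<dots> \<le> K * l2norm (trunc F ?a) * l2norm g"
      using K trunc_l2[OF F] by (intro mult_right_mono) auto
    also have "l2norm (trunc F ?a) = sqrt s"
      using l2norm_trunc[OF F, of ?a] unfolding s_def
      by (metis l2norm_nonneg real_sqrt_unique)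
    finally have "s \<le> K * sqrt s * l2norm g" .
    hence "sqrt s * sqrt s \<le> sqrt s * (K * l2norm g)" using s0 by (simp add: mult_ac)
    hence "sqrt s \<le> K * l2norm g \<or> sqrt s = 0"
      by (metis mult_le_cancel_left real_sqrt_ge_zero s0 linorder_not_le order_less_le)
    hence "sqrt s \<le> K * l2norm g" using K by auto
    hence "(sqrt s)\<^sup>2 \<le> (K * l2norm g)\<^sup>2" using s0 by (intro power_mono) auto
    thus ?thesis using s0 by (simp add: s_def)
  qed
  show sm: "?a \<in> l2" unfolding l2_def
    by (auto intro!: nonneg_bdd_above_summable_on bdd_aboveI2[where M="(K * l2norm g)\<^sup>2"] bound)
  have "(l2norm ?a)\<^sup>2 \<le> (K * l2norm g)\<^sup>2"
    unfolding l2norm_sq using sm unfolding l2_def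
    by (intro infsum_le_finite_sums) (auto intro: bound)
  thus "l2norm ?a \<le> K * l2norm g" using K
    by (meson l2norm_nonneg mult_nonneg_nonneg power2_le_imp_le)
qed

lemma adjc_bop: fixes T :: "('i::countable \<Rightarrow> complex) \<Rightarrow> ('i \<Rightarrow> complex)"
  assumes T: "bounded_op T" shows "bounded_op (adjc T)"
proof -
  obtain K where K: "K \<ge> 0" "\<forall>f\<in>l2. l2norm (T f) \<le> K * l2norm f" using bop_bound[OF T] by auto
  show ?thesis unfolding bounded_op_def
  proof (intro conjI ballI allI exI)
    fix f :: "'i \<Rightarrow> complex" assume "f \<in> l2" thus "adjc T f \<in> l2" using adjc_l2[OF T K] by auto
  next
    fix f g :: "'i \<Rightarrow> complex" and a b assume fg: "f \<in> l2" "g \<in> l2"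
    have e: "(\<lambda>i. a * f i + b * g i) = sc a f + sc b g" by (auto simp: sc_def)
    show "adjc T (\<lambda>i. a * f i + b * g i) = (\<lambda>i. a * adjc T f i + b * adjc T g i)"
      unfolding e adjc_def
    proof
      fix i
      have d: "T (delta i) \<in> l2" by (rule bop_l2[OF T delta_l2])
      show "cinner (T (delta i)) (sc a f + sc b g) = a * cinner (T (delta i)) f + b * cinner (T (delta i)) g"
        using cinner_add_right[OF d l2_sc[OF fg(1)] l2_sc[OF fg(2)]] by (simp add: cinner_sc_right)
    qed
  next
    fix f :: "'i \<Rightarrow> complex" assume "f \<in> l2" thus "l2norm (adjc T f) \<le> K * l2norm f" using adjc_l2[OF T K] by auto
  qed
qed

lemma adjc_adjoint:
  fixes T :: "('i::countable \<Rightarrow> complex) \<Rightarrow> ('i \<Rightarrow> complex)"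
  assumes T: "bounded_op T" and f: "f \<in> l2" and g: "g \<in> l2"
  shows "cinner (T f) g = cinner f (adjc T g)"
proof -
  obtain K where K: "K \<ge> 0" "\<forall>f\<in>l2. l2norm (T f) \<le> K * l2norm f" using bop_bound[OF T] by auto
  let ?a = "adjc T g"
  let ?F = "finite_subsets_at_top (UNIV :: 'i set)"
  have a: "?a \<in> l2" using adjc_l2[OF T K g] by auto
  have lim1: "((\<lambda>F. \<Sum>i\<in>F. cnj (f i) * ?a i) \<longlongrightarrow> cinner f ?a) ?F"
    unfolding cinner_def using cinner_summable[OF f a] by (rule infsum_tendsto)
  define d where "d F = (\<Sum>\<^sub>\<infinity>i. (cmod (f i))\<^sup>2) - (\<Sum>i\<in>F. (cmod (f i))\<^sup>2)" for F
  have dlim: "(d \<longlongrightarrow> 0) ?F"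
  proof -
    have "((\<lambda>F. \<Sum>i\<in>F. (cmod (f i))\<^sup>2) \<longlongrightarrow> (\<Sum>\<^sub>\<infinity>i. (cmod (f i))\<^sup>2)) ?F"
      using f unfolding l2_def by (intro infsum_tendsto) auto
    hence "((\<lambda>F. (\<Sum>\<^sub>\<infinity>i. (cmod (f i))\<^sup>2) - (\<Sum>i\<in>F. (cmod (f i))\<^sup>2)) \<longlongrightarrow>
       (\<Sum>\<^sub>\<infinity>i. (cmod (f i))\<^sup>2) - (\<Sum>\<^sub>\<infinity>i. (cmod (f i))\<^sup>2)) ?F"
      by (intro tendsto_diff tendsto_const)
    thus ?thesis unfolding d_def by simp
  qed
  have normd: "(l2norm (f - trunc F f))\<^sup>2 = d F" if F: "finite F" for F
  proof -
    have e: "(cmod ((f - trunc F f) i))\<^sup>2 = (cmod (f i))\<^sup>2 - (cmod (trunc F f i))\<^sup>2" for i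
      by (auto simp: trunc_def)
    have "(l2norm (f - trunc F f))\<^sup>2 = (\<Sum>\<^sub>\<infinity>i. (cmod (f i))\<^sup>2 - (cmod (trunc F f i))\<^sup>2)"
      unfolding l2norm_sq e by simp
    also have "\<dots> = (\<Sum>\<^sub>\<infinity>i. (cmod (f i))\<^sup>2) - (\<Sum>\<^sub>\<infinity>i. (cmod (trunc F f i))\<^sup>2)"
    proof -
      have s1: "(\<lambda>i. (cmod (f i))\<^sup>2) summable_on UNIV" using f unfolding l2_def by auto
      have s2: "(\<lambda>i. - (cmod (trunc F f i))\<^sup>2) summable_on UNIV"
        using trunc_l2[OF F, of f] unfolding l2_def summable_on_uminus by auto
      show ?thesis using infsum_add[OF s1 s2] infsum_uminus[of "\<lambda>i. (cmod (trunc F f i))\<^sup>2" UNIV]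
        by simp
    qed
    also have "\<dots> = d F" unfolding d_def infsum_trunc_sq[OF F] ..
    finally show ?thesis .
  qed
  have est: "cmod (cinner (T f) g - (\<Sum>i\<in>F. cnj (f i) * ?a i)) \<le> K * sqrt (d F) * l2norm g"
    if F: "finite F" for F
  proof -
    have tl: "trunc F f \<in> l2" by (rule trunc_l2[OF F])
    have "cinner (T f) g - (\<Sum>i\<in>F. cnj (f i) * ?a i) = cinner (T f) g - cinner (T (trunc F f)) g"
      using cinner_T_trunc[OF T F g] by simp
    also have "\<dots> = cinner (T f - T (trunc F f)) g"
      using bop_l2[OF T f] bop_l2[OF T tl] g by (simp add: cinner_diff_left)
    also have "T f - T (trunc F f) = T (f - trunc F f)"
      using linon_diff[OF bop_linon[OF T] subspace_l2 f tl] by simp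
    finally have "cmod (cinner (T f) g - (\<Sum>i\<in>F. cnj (f i) * ?a i)) = cmod (cinner (T (f - trunc F f)) g)"
      by simp
    also have "\<dots> \<le> l2norm (T (f - trunc F f)) * l2norm g"
      using f tl g by (intro cauchy_schwarz bop_l2[OF T]) auto
    also have "\<dots> \<le> K * l2norm (f - trunc F f) * l2norm g"
      using K f tl by (intro mult_right_mono) auto
    also have "l2norm (f - trunc F f) = sqrt (d F)"
      using normd[OF F] by (metis l2norm_nonneg real_sqrt_unique)
    finally show ?thesis .
  qed
  have lim2: "((\<lambda>F. \<Sum>i\<in>F. cnj (f i) * ?a i) \<longlongrightarrow> cinner (T f) g) ?F"
  proof -
    have "((\<lambda>F. K * sqrt (d F) * l2norm g) \<longlongrightarrow> K * sqrt 0 * l2norm g) ?F"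
      by (intro tendsto_intros dlim)
    hence z: "((\<lambda>F. K * sqrt (d F) * l2norm g) \<longlongrightarrow> 0) ?F" by simp
    have "((\<lambda>F. cinner (T f) g - (\<Sum>i\<in>F. cnj (f i) * ?a i)) \<longlongrightarrow> 0) ?F"
      by (rule Lim_null_comparison[OF _ z])
         (auto intro!: eventually_finite_subsets_at_top_weakI est)
    hence "((\<lambda>F. cinner (T f) g - (cinner (T f) g - (\<Sum>i\<in>F. cnj (f i) * ?a i))) \<longlongrightarrow> cinner (T f) g - 0) ?F"
      by (intro tendsto_diff tendsto_const)
    thus ?thesis by simp
  qed
  show ?thesis using tendsto_unique[OF finite_subsets_at_top_neq_bot lim2 lim1] .
qed

lemma adj_props:
  fixes T :: "('i::countable \<Rightarrow> complex) \<Rightarrow> ('i \<Rightarrow> complex)"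
  assumes T: "bounded_op T"
  shows "bounded_op (adj T)" "\<And>f g. f \<in> l2 \<Longrightarrow> g \<in> l2 \<Longrightarrow> cinner (T f) g = cinner f (adj T g)"
proof -
  have ex: "\<exists>S. bounded_op S \<and> (\<forall>f\<in>l2. \<forall>g\<in>l2. cinner (T f) g = cinner f (S g))"
    using adjc_bop[OF T] adjc_adjoint[OF T] by blast
  have "bounded_op (adj T) \<and> (\<forall>f\<in>l2. \<forall>g\<in>l2. cinner (T f) g = cinner f (adj T g))"
    unfolding adj_def by (rule someI_ex[OF ex])
  thus "bounded_op (adj T)" "\<And>f g. f \<in> l2 \<Longrightarrow> g \<in> l2 \<Longrightarrow> cinner (T f) g = cinner f (adj T g)"
    by auto
qed

lemma l2_ext:
  assumes "x \<in> l2" "y \<in> l2" "\<And>f. f \<in> l2 \<Longrightarrow> cinner f x = cinner f y"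
  shows "x = y"
proof -
  have "cinner (x - y) (x - y) = 0"
    using assms cinner_diff_right[of "x - y" x y] by auto
  hence "x - y = 0" using assms by (intro cinner_self_zero) auto
  thus ?thesis by simp
qed


definition lop :: "(('i::countable \<Rightarrow> complex) \<Rightarrow> ('i \<Rightarrow> complex)) \<Rightarrow> bool" where
  "lop X \<longleftrightarrow> (\<forall>f\<in>l2. X f \<in> l2) \<and> linon X l2"

definition adjp :: "(('i::countable \<Rightarrow> complex) \<Rightarrow> ('i \<Rightarrow> complex)) \<Rightarrow> (('i \<Rightarrow> complex) \<Rightarrow> ('i \<Rightarrow> complex)) \<Rightarrow> bool" where
  "adjp X Y \<longleftrightarrow> (\<forall>f\<in>l2. \<forall>g\<in>l2. cinner (X f) g = cinner f (Y g))"

lemma lop_l2: "lop X \<Longrightarrow> f \<in> l2 \<Longrightarrow> X f \<in> l2"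
  by (simp add: lop_def)

lemma lop_linon: "lop X \<Longrightarrow> linon X l2"
  by (simp add: lop_def)

lemma bop_lop: "bounded_op X \<Longrightarrow> lop X"
  by (simp add: lop_def bop_l2 bop_linon)

lemma lop_comp: "lop X \<Longrightarrow> lop Y \<Longrightarrow> lop (\<lambda>f. X (Y f))"
  unfolding lop_def linon_def by auto

lemma lop_id: "lop (\<lambda>f. f)"
  unfolding lop_def linon_def by auto

lemma lop_diff: "lop X \<Longrightarrow> lop Y \<Longrightarrow> lop (\<lambda>f. X f - Y f)"
  unfolding lop_def linon_def
  by (auto simp: sc_def fun_eq_iff algebra_simps intro!: l2_diff)

lemma lop_add: "lop X \<Longrightarrow> lop Y \<Longrightarrow> lop (\<lambda>f. X f + Y f)"
  unfolding lop_def linon_def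
  by (auto simp: sc_def fun_eq_iff algebra_simps intro!: l2_add)

lemma lop_zero: "lop X \<Longrightarrow> X 0 = 0"
  using linon_zero[OF lop_linon subspace_l2] by blast

lemma lop_diff_app: "lop X \<Longrightarrow> f \<in> l2 \<Longrightarrow> g \<in> l2 \<Longrightarrow> X (f - g) = X f - X g"
  using linon_diff[OF lop_linon subspace_l2] by blast

lemma lop_add_app: "lop X \<Longrightarrow> f \<in> l2 \<Longrightarrow> g \<in> l2 \<Longrightarrow> X (f + g) = X f + X g"
  using linon_add[OF lop_linon] by blast

lemma lop_neg_app: "lop X \<Longrightarrow> f \<in> l2 \<Longrightarrow> X (- f) = - X f"
  using linon_neg[OF lop_linon] by blast

lemma adjp_sym: "adjp X Y \<Longrightarrow> adjp Y X"
  unfolding adjp_def by (metis cinner_cnj)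

lemma adjp_comp: "lop X \<Longrightarrow> lop Y \<Longrightarrow> adjp X X' \<Longrightarrow> adjp Y Y' \<Longrightarrow> lop X' \<Longrightarrow> lop Y'
  \<Longrightarrow> adjp (\<lambda>f. X (Y f)) (\<lambda>f. Y' (X' f))"
  unfolding adjp_def by (simp add: lop_l2)

lemma image_subspace_l2: "lop X \<Longrightarrow> fv.subspace (X ` l2)"
  by (rule subspace_image[OF lop_linon subspace_l2])

lemma image_sub_l2: "lop X \<Longrightarrow> X ` l2 \<subseteq> l2"
  using lop_l2 by blast

lemma sa_inj_on_range:
  assumes G: "lop G" "adjp G G"
  shows "inj_on G (G ` l2)"
proof (rule inj_onI)
  fix a b assume ab: "a \<in> G ` l2" "b \<in> G ` l2" "G a = G b"
  have sub: "fv.subspace (G ` l2)" by (rule image_subspace_l2[OF G(1)])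
  have n: "a - b \<in> G ` l2" using ab fv.subspace_diff[OF sub] by blast
  then obtain m where m: "m \<in> l2" "a - b = G m" by auto
  have al2: "a \<in> l2" "b \<in> l2" using ab lop_l2[OF G(1)] by auto
  have "G (a - b) = 0" using ab lop_diff_app[OF G(1) al2] by simp
  hence "cinner (a - b) (a - b) = 0"
    using G(2) m al2 unfolding adjp_def by (metis cinner_zero_right l2_diff)
  hence "a - b = 0" using al2 by (intro cinner_self_zero) auto
  thus "a = b" by simp
qed

lemma sa_finite_rank_solve:
  assumes G: "lop G" "adjp G G" and fin: "cdim (G ` l2) \<noteq> \<infinity>" and x: "x \<in> l2"
  shows "\<exists>n\<in>G ` l2. G n = G x"
proof -
  let ?N = "G ` l2"
  have sub: "fv.subspace ?N" by (rule image_subspace_l2[OF G(1)])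
  have lin: "linon G ?N" using lop_linon[OF G(1)] image_sub_l2[OF G(1)] by (rule linon_subset)
  have into: "G ` ?N \<subseteq> ?N" using image_sub_l2[OF G(1)] by auto
  have "G ` ?N = ?N" by (rule endo_inj_surj[OF lin sub into sa_inj_on_range[OF G] fin])
  moreover have "G x \<in> ?N" using x by auto
  ultimately show ?thesis by (metis imageE)
qed

lemma factor_range:
  assumes S: "lop S" and S': "lop S'" and adj: "adjp S S'"
    and fin: "cdim ((\<lambda>f. S' (S f)) ` l2) \<noteq> \<infinity>"
  shows "S ` l2 = S ` ((\<lambda>f. S' (S f)) ` l2)"
proof -
  let ?G = "\<lambda>f. S' (S f)"
  have G: "lop ?G" using lop_comp[OF S' S] .
  have Gsa: "adjp ?G ?G"
    unfolding adjp_def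
  proof (intro ballI)
    fix f g :: "'a \<Rightarrow> complex" assume fg: "f \<in> l2" "g \<in> l2"
    have "cinner (S' (S f)) g = cnj (cinner g (S' (S f)))" by (rule cinner_cnj)
    also have "\<dots> = cnj (cinner (S g) (S f))" using adj fg lop_l2[OF S] unfolding adjp_def by simp
    also have "\<dots> = cinner (S f) (S g)" by (simp flip: cinner_cnj)
    also have "\<dots> = cinner f (S' (S g))" using adj fg lop_l2[OF S] unfolding adjp_def by simp
    finally show "cinner (S' (S f)) g = cinner f (S' (S g))" .
  qed
  show ?thesis
  proof
    show "S ` ?G ` l2 \<subseteq> S ` l2" using image_sub_l2[OF G] by auto
    show "S ` l2 \<subseteq> S ` ?G ` l2"
    proof
      fix y assume "y \<in> S ` l2"
      then obtain x where x: "x \<in> l2" "y = S x" by auto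
      obtain n where n: "n \<in> ?G ` l2" "?G n = ?G x" using sa_finite_rank_solve[OF G Gsa fin x(1)] by auto
      have nl2: "n \<in> l2" using n image_sub_l2[OF G] by auto
      have d: "x - n \<in> l2" using x nl2 by auto
      have "?G (x - n) = 0" using lop_diff_app[OF G x(1) nl2] n by simp
      hence "cinner (S (x - n)) (S (x - n)) = 0"
        using adj d lop_l2[OF S d] unfolding adjp_def by (metis cinner_zero_right)
      hence "S (x - n) = 0" using lop_l2[OF S d] by (intro cinner_self_zero) auto
      hence "S x = S n" using lop_diff_app[OF S x(1) nl2] by simp
      thus "y \<in> S ` ?G ` l2" using x n by auto
    qed
  qed
qed

lemma rank_le_rank_gram:
  assumes S: "lop S" and S': "lop S'" and adj: "adjp S S'"
    and fin: "cdim ((\<lambda>f. S' (S f)) ` l2) \<noteq> \<infinity>"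
  shows "cdim (S ` l2) \<le> cdim ((\<lambda>f. S' (S f)) ` l2)"
proof -
  let ?G = "\<lambda>f. S' (S f)"
  have G: "lop ?G" using lop_comp[OF S' S] .
  have "cdim (S ` l2) = cdim (S ` ?G ` l2)" using factor_range[OF assms] by simp
  also have "\<dots> \<le> cdim (?G ` l2)"
    using linon_subset[OF lop_linon[OF S] image_sub_l2[OF G]] image_subspace_l2[OF G]
    by (rule cdim_image_le)
  finally show ?thesis .
qed

lemma rank_comp_le: "lop X \<Longrightarrow> lop Y \<Longrightarrow> cdim ((\<lambda>f. X (Y f)) ` l2) \<le> cdim (Y ` l2)"
proof -
  assume X: "lop X" and Y: "lop Y"
  have "(\<lambda>f. X (Y f)) ` l2 = X ` (Y ` l2)" by auto
  also have "cdim \<dots> \<le> cdim (Y ` l2)"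
    using linon_subset[OF lop_linon[OF X] image_sub_l2[OF Y]] image_subspace_l2[OF Y]
    by (rule cdim_image_le)
  finally show ?thesis .
qed

lemma rank_comp_le2: "lop X \<Longrightarrow> lop Y \<Longrightarrow> cdim ((\<lambda>f. X (Y f)) ` l2) \<le> cdim (X ` l2)"
  by (intro cdim_mono) (auto simp: lop_l2)

lemma rank_adj_le:
  assumes S: "lop S" and S': "lop S'" and adj: "adjp S S'"
    and fin: "cdim (S' ` l2) \<noteq> \<infinity>"
  shows "cdim (S ` l2) \<le> cdim (S' ` l2)"
proof -
  have le: "cdim ((\<lambda>f. S' (S f)) ` l2) \<le> cdim (S' ` l2)" by (rule rank_comp_le2[OF S' S])
  hence "cdim ((\<lambda>f. S' (S f)) ` l2) \<noteq> \<infinity>" using fin by (metis enat_ord_simps(5) neq_iff top_greatest infinity_ileE)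
  from rank_le_rank_gram[OF S S' adj this] le show ?thesis by simp
qed

lemma rank_adj_eq:
  assumes S: "lop S" and S': "lop S'" and adj: "adjp S S'"
  shows "cdim (S ` l2) = cdim (S' ` l2)"
proof (cases "cdim (S ` l2) = \<infinity> \<or> cdim (S' ` l2) = \<infinity>")
  case True
  thus ?thesis using rank_adj_le[OF S S' adj] rank_adj_le[OF S' S adjp_sym[OF adj]] by force
next
  case False
  thus ?thesis using rank_adj_le[OF S S' adj] rank_adj_le[OF S' S adjp_sym[OF adj]] by auto
qed

lemma cinner_expand:
  assumes "x \<in> l2" "y \<in> l2"
  shows "cinner (x + y) (x + y) = cinner x x + cinner y y + cinner x y + cnj (cinner x y)"
  using assms by (simp add: cinner_add_left cinner_add_right l2_add cinner_cnj[of y x])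

lemma isometry_inner:
  fixes V :: "('i::countable \<Rightarrow> complex) \<Rightarrow> ('i \<Rightarrow> complex)"
  assumes V: "isometry V" and f: "f \<in> l2" and g: "g \<in> l2"
  shows "cinner (V f) (V g) = cinner f g"
proof -
  have B: "bounded_op V" using V by (simp add: isometry_def)
  have L: "lop V" by (rule bop_lop[OF B])
  have nn: "cinner (V h) (V h) = cinner h h" if "h \<in> l2" for h
    using V that by (simp add: isometry_def cinner_self)
  let ?z = "cinner (V f) (V g)" and ?w = "cinner f g"
  have Vf: "V f \<in> l2" "V g \<in> l2" using lop_l2[OF L] f g by auto
  have e1: "?z + cnj ?z = ?w + cnj ?w"
  proof -
    have "cinner (V (f + g)) (V (f + g)) = cinner (f + g) (f + g)" using nn f g by auto
    moreover have "V (f + g) = V f + V g" using lop_add_app[OF L f g] .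
    ultimately show ?thesis using cinner_expand[OF Vf] cinner_expand[OF f g] nn f g by simp
  qed
  have ig: "sc \<i> g \<in> l2" using g by auto
  have e2: "\<i> * ?z + cnj (\<i> * ?z) = \<i> * ?w + cnj (\<i> * ?w)"
  proof -
    have "cinner (V (f + sc \<i> g)) (V (f + sc \<i> g)) = cinner (f + sc \<i> g) (f + sc \<i> g)" using nn f ig by auto
    moreover have "V (f + sc \<i> g) = V f + sc \<i> (V g)"
      using lop_add_app[OF L f ig] linon_sc[OF lop_linon[OF L] g] by simp
    ultimately show ?thesis using cinner_expand[OF Vf(1) l2_sc[OF Vf(2)]] cinner_expand[OF f ig] nn f g
      by (simp add: cinner_sc_right cinner_sc_left)
  qed
  show ?thesis using e1 e2 by (simp add: complex_eq_iff)
qed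

lemma isometry_adj_left:
  fixes V :: "('i::countable \<Rightarrow> complex) \<Rightarrow> ('i \<Rightarrow> complex)"
  assumes V: "isometry V" and f: "f \<in> l2"
  shows "adj V (V f) = f"
proof -
  have B: "bounded_op V" using V by (simp add: isometry_def)
  show ?thesis
  proof (rule l2_ext)
    show "adj V (V f) \<in> l2" using adj_props(1)[OF B] B f by (simp add: bop_l2)
    show "f \<in> l2" by fact
    fix h :: "'i \<Rightarrow> complex" assume h: "h \<in> l2"
    have "cinner h (adj V (V f)) = cinner (V h) (V f)"
      using adj_props(2)[OF B h bop_l2[OF B f]] by simp
    also have "\<dots> = cinner h f" by (rule isometry_inner[OF V h f])
    finally show "cinner h (adj V (V f)) = cinner h f" .
  qed
qed


lemma enat_le_fin: "(x::enat) \<le> y \<Longrightarrow> y \<noteq> \<infinity> \<Longrightarrow> x \<noteq> \<infinity>"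
  by (cases x; cases y) auto

lemma diff_proj_eig:
  assumes X: "lop X" "adjp X X" "\<And>f. f \<in> l2 \<Longrightarrow> X (X f) = X f"
    and Y: "lop Y" "adjp Y Y" "\<And>f. f \<in> l2 \<Longrightarrow> Y (Y f) = Y f"
    and z: "z \<in> l2" and e: "X z - Y z = z"
  shows "Y z = 0 \<and> X z = z"
proof -
  have l: "X z \<in> l2" "Y z \<in> l2" "X (Y z) \<in> l2" using z lop_l2 X(1) Y(1) by auto
  have "X (X z - Y z) = X z" using e by simp
  hence "X z - X (Y z) = X z" using lop_diff_app[OF X(1) l(1,2)] X(3)[OF z] by simp
  hence XY: "X (Y z) = 0" by simp
  have a: "cinner (Y z) (Y z) = cinner z (Y z)"
    using Y(2) z l unfolding adjp_def by (simp add: Y(3)[OF z])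
  have "cinner z (Y z) = cinner (X z - Y z) (Y z)" using e by simp
  also have "\<dots> = cinner (X z) (Y z) - cinner (Y z) (Y z)" using l by (simp add: cinner_diff_left)
  also have "cinner (X z) (Y z) = cinner z (X (Y z))" using X(2) z l unfolding adjp_def by blast
  also have "\<dots> = 0" using XY by simp
  finally have "cinner (Y z) (Y z) = - cinner (Y z) (Y z)" using a by simp
  hence "cinner (Y z) (Y z) = 0" by simp
  hence "Y z = 0" using l by (intro cinner_self_zero) auto
  thus ?thesis using e by simp
qed

lemma subspace_fix_kill:
  assumes X: "lop X" and Y: "lop Y"
  shows "fv.subspace {z\<in>l2. X z = z \<and> Y z = 0}"
proof -
  have D: "lop (\<lambda>z. X z - z)" using lop_diff[OF X lop_id] .
  have e: "{z\<in>l2. X z = z \<and> Y z = 0} = {z\<in>l2. X z - z = 0} \<inter> {z\<in>l2. Y z = 0}"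
    by (simp add: set_eq_iff) blast
  have A: "fv.subspace {z\<in>l2. X z - z = 0}"
    using subspace_kernel[OF lop_linon[OF D] subspace_l2] .
  have B: "fv.subspace {z\<in>l2. Y z = 0}"
    using subspace_kernel[OF lop_linon[OF Y] subspace_l2] .
  show ?thesis unfolding e by (rule fv.subspace_inter[OF A B])
qed

lemma proj_ineq:
  assumes X: "lop X" "adjp X X" "\<And>f. f \<in> l2 \<Longrightarrow> X (X f) = X f"
    and Y: "lop Y" "adjp Y Y" "\<And>f. f \<in> l2 \<Longrightarrow> Y (Y f) = Y f"
    and M: "fv.subspace M" "M \<subseteq> l2" "X ` M \<subseteq> M" "Y ` M \<subseteq> M"
    and F1: "{z\<in>l2. X z = z \<and> Y z = 0} \<subseteq> M"
  shows "cdim (Y ` M) + cdim {z\<in>l2. X z = z \<and> Y z = 0} \<le> cdim (X ` M) + cdim {z\<in>l2. X z = 0 \<and> Y z = z}"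
proof -
  let ?F1 = "{z\<in>l2. X z = z \<and> Y z = 0}" and ?F2 = "{z\<in>l2. X z = 0 \<and> Y z = z}"
  let ?RM = "Y ` M"
  have linY: "linon Y M" using lop_linon[OF Y(1)] M(2) by (rule linon_subset)
  have linX: "linon X M" using lop_linon[OF X(1)] M(2) by (rule linon_subset)
  have RMsub: "fv.subspace ?RM" by (rule subspace_image[OF linY M(1)])
  have RMM: "?RM \<subseteq> M" using M by auto
  have linXR: "linon X ?RM" using linX RMM by (rule linon_subset)
  have step1: "cdim ?RM \<le> cdim (X ` ?RM) + cdim {y\<in>?RM. X y = 0}"
    by (rule cdim_rank_nullity_le[OF linXR RMsub])
  have "{y\<in>?RM. X y = 0} \<subseteq> ?F2"
  proof
    fix y assume "y \<in> {y\<in>?RM. X y = 0}"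
    then obtain m where m: "m \<in> M" "y = Y m" "X y = 0" by auto
    have "m \<in> l2" using m M by auto
    hence "Y y = y" using Y(3) m by simp
    moreover have "y \<in> l2" using m M by auto
    ultimately show "y \<in> ?F2" using m by auto
  qed
  hence step2: "cdim {y\<in>?RM. X y = 0} \<le> cdim ?F2" by (rule cdim_mono)
  have step3: "cdim (X ` ?RM) + cdim ?F1 \<le> cdim (X ` M)"
  proof (rule cdim_direct_ge)
    show "fv.subspace (X ` ?RM)" by (rule subspace_image[OF linXR RMsub])
    show "fv.subspace ?F1" by (rule subspace_fix_kill[OF X(1) Y(1)])
    show "X ` ?RM \<subseteq> X ` M" using RMM by auto
    show "?F1 \<subseteq> X ` M"
    proof
      fix z assume z: "z \<in> ?F1"
      hence "z = X z" "z \<in> M" using F1 by auto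
      thus "z \<in> X ` M" by (metis imageI)
    qed
    show "X ` ?RM \<inter> ?F1 \<subseteq> {0}"
    proof
      fix z assume zz: "z \<in> X ` ?RM \<inter> ?F1"
      then obtain m where m: "m \<in> M" "z = X (Y m)" by auto
      have ml: "m \<in> l2" using m M by auto
      have yl: "Y m \<in> l2" using ml lop_l2[OF Y(1)] by auto
      have z: "z \<in> l2" "X z = z" "Y z = 0" using zz by auto
      have "cinner z z = cinner (X (Y m)) z" using m by simp
      also have "\<dots> = cinner (Y m) (X z)" using X(2) yl z unfolding adjp_def by blast
      also have "\<dots> = cinner (Y (Y m)) z" using z Y(3)[OF ml] by simp
      also have "\<dots> = cinner (Y m) (Y z)" using Y(2) yl z unfolding adjp_def by blast
      also have "\<dots> = 0" using z by simp
      finally have "z = 0" using z by (intro cinner_self_zero) auto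
      thus "z \<in> {0}" by simp
    qed
  qed
  have "cdim ?RM + cdim ?F1 \<le> cdim (X ` ?RM) + cdim {y\<in>?RM. X y = 0} + cdim ?F1"
    using step1 by (simp add: add_right_mono)
  also have "\<dots> \<le> cdim (X ` ?RM) + cdim ?F2 + cdim ?F1"
    using step2 by (simp add: add_right_mono add_left_mono)
  also have "\<dots> = (cdim (X ` ?RM) + cdim ?F1) + cdim ?F2" by (simp add: ac_simps)
  also have "\<dots> \<le> cdim (X ` M) + cdim ?F2" using step3 by (simp add: add_right_mono)
  finally show ?thesis .
qed

locale twoproj =
  fixes P R :: "('i::countable \<Rightarrow> complex) \<Rightarrow> ('i \<Rightarrow> complex)"
  assumes P_lop: "lop P" and R_lop: "lop R"
    and P_sa: "adjp P P" and R_sa: "adjp R R"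
    and P_idem: "\<And>f. f \<in> l2 \<Longrightarrow> P (P f) = P f"
    and R_idem: "\<And>f. f \<in> l2 \<Longrightarrow> R (R f) = R f"
begin

definition C where "C f = P f - R f"
definition Q where "Q f = R f - P (R f)"
definition E1 where "E1 = {f\<in>l2. C f = f}"
definition Em where "Em = {f\<in>l2. C f = - f}"

lemma l2P[simp]: "f \<in> l2 \<Longrightarrow> P f \<in> l2" using lop_l2[OF P_lop] .
lemma l2R[simp]: "f \<in> l2 \<Longrightarrow> R f \<in> l2" using lop_l2[OF R_lop] .
lemma P_diff[simp]: "f \<in> l2 \<Longrightarrow> g \<in> l2 \<Longrightarrow> P (f - g) = P f - P g" using lop_diff_app[OF P_lop] .
lemma R_diff[simp]: "f \<in> l2 \<Longrightarrow> g \<in> l2 \<Longrightarrow> R (f - g) = R f - R g" using lop_diff_app[OF R_lop] .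
lemma P_add[simp]: "f \<in> l2 \<Longrightarrow> g \<in> l2 \<Longrightarrow> P (f + g) = P f + P g" using lop_add_app[OF P_lop] .
lemma R_add[simp]: "f \<in> l2 \<Longrightarrow> g \<in> l2 \<Longrightarrow> R (f + g) = R f + R g" using lop_add_app[OF R_lop] .
lemma P_neg[simp]: "f \<in> l2 \<Longrightarrow> P (- f) = - P f" using lop_neg_app[OF P_lop] .
lemma R_neg[simp]: "f \<in> l2 \<Longrightarrow> R (- f) = - R f" using lop_neg_app[OF R_lop] .
lemmas idems[simp] = P_idem R_idem
lemmas l2ops[simp] = l2_diff l2_add l2_uminus

lemma C_lop: "lop C"
  unfolding C_def[abs_def] by (rule lop_diff[OF P_lop R_lop])

lemma Q_lop: "lop Q"
  unfolding Q_def[abs_def] by (rule lop_diff[OF R_lop lop_comp[OF P_lop R_lop]])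

lemma l2C[simp]: "f \<in> l2 \<Longrightarrow> C f \<in> l2" using lop_l2[OF C_lop] .

lemma C_diff[simp]: "f \<in> l2 \<Longrightarrow> g \<in> l2 \<Longrightarrow> C (f - g) = C f - C g" using lop_diff_app[OF C_lop] .
lemma C_neg[simp]: "f \<in> l2 \<Longrightarrow> C (- f) = - C f" using lop_neg_app[OF C_lop] .

lemma C_sa: "adjp C C"
  unfolding adjp_def C_def
  using P_sa R_sa unfolding adjp_def by (simp add: cinner_diff_left cinner_diff_right)

lemma E1_char: "E1 = {z\<in>l2. P z = z \<and> R z = 0}"
proof -
  have "z \<in> E1 \<longleftrightarrow> z \<in> l2 \<and> P z = z \<and> R z = 0" for z
  proof
    assume z: "z \<in> E1"
    hence "z \<in> l2" "P z - R z = z" by (auto simp: E1_def C_def)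
    thus "z \<in> l2 \<and> P z = z \<and> R z = 0"
      using diff_proj_eig[OF P_lop P_sa P_idem R_lop R_sa R_idem] by blast
  qed (auto simp: E1_def C_def)
  thus ?thesis by auto
qed

lemma Em_char: "Em = {z\<in>l2. R z = z \<and> P z = 0}"
proof -
  have "z \<in> Em \<longleftrightarrow> z \<in> l2 \<and> R z = z \<and> P z = 0" for z
  proof
    assume z: "z \<in> Em"
    hence zl: "z \<in> l2" "P z - R z = - z" by (auto simp: Em_def C_def)
    hence "z \<in> l2" "R z - P z = z" by (metis minus_diff_eq minus_minus)+
    thus "z \<in> l2 \<and> R z = z \<and> P z = 0"
      using diff_proj_eig[OF R_lop R_sa R_idem P_lop P_sa P_idem] by blast
  qed (auto simp: Em_def C_def)
  thus ?thesis by auto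
qed

definition G where "G f = C (C f)"

lemma G_lop: "lop G" unfolding G_def[abs_def] by (rule lop_comp[OF C_lop C_lop])
lemma G_sa: "adjp G G" unfolding G_def[abs_def] by (rule adjp_comp[OF C_lop C_lop C_sa C_sa C_lop C_lop])

lemma G_expand: "f \<in> l2 \<Longrightarrow> G f = P f - P (R f) - R (P f) + R f"
  by (simp add: G_def C_def algebra_simps)

lemma PG: "f \<in> l2 \<Longrightarrow> P (G f) = G (P f)"
  by (simp add: G_expand algebra_simps)

lemma RG: "f \<in> l2 \<Longrightarrow> R (G f) = G (R f)"
  by (simp add: G_expand algebra_simps)

definition M where "M = G ` l2"

lemma M_sub: "fv.subspace M" unfolding M_def by (rule image_subspace_l2[OF G_lop])
lemma M_l2: "M \<subseteq> l2" unfolding M_def by (rule image_sub_l2[OF G_lop])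
lemma PM: "P ` M \<subseteq> M" unfolding M_def using PG by (auto intro!: imageI)
lemma RM: "R ` M \<subseteq> M" unfolding M_def using RG by (auto intro!: imageI)

lemma M_le_C: "cdim M \<le> cdim (C ` l2)"
  unfolding M_def G_def[abs_def] by (intro cdim_mono) auto

lemma C_inj_M: "inj_on C M"
proof (rule inj_onI)
  fix a b assume ab: "a \<in> M" "b \<in> M" "C a = C b"
  hence "G a = G b" by (simp add: G_def)
  thus "a = b" using sa_inj_on_range[OF G_lop G_sa] ab unfolding M_def by (meson inj_onD)
qed

lemma E1_M: "E1 \<subseteq> M"
proof
  fix f assume f: "f \<in> E1"
  hence "G f = f" "f \<in> l2" by (auto simp: E1_def G_def)
  thus "f \<in> M" unfolding M_def by (metis imageI)
qed

lemma Em_M: "Em \<subseteq> M"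
proof
  fix f assume f: "f \<in> Em"
  hence "G f = f" "f \<in> l2" by (auto simp: Em_def G_def)
  thus "f \<in> M" unfolding M_def by (metis imageI)
qed

lemma C_ker_M: "m \<in> M \<Longrightarrow> C m = 0 \<Longrightarrow> m = 0"
  using C_inj_M fv.subspace_0[OF M_sub] lop_zero[OF C_lop] by (metis inj_onD)

context
  assumes finC: "cdim (C ` l2) \<noteq> \<infinity>"
begin

lemma finM: "cdim M \<noteq> \<infinity>" using enat_le_fin[OF M_le_C finC] .

lemma C_range: "C ` l2 = C ` M"
proof -
  have fin: "cdim ((\<lambda>f. C (C f)) ` l2) \<noteq> \<infinity>" using finM unfolding M_def G_def[abs_def] .
  show ?thesis using factor_range[OF C_lop C_lop C_sa fin] unfolding M_def G_def[abs_def] .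
qed

lemma rankC: "cdim (C ` l2) = cdim M"
proof -
  have "cdim (C ` M) = cdim M"
    by (rule cdim_image_inj[OF linon_subset[OF lop_linon[OF C_lop] M_l2] M_sub C_inj_M])
  thus ?thesis using C_range by simp
qed

lemma Q_range: "Q ` l2 = (\<lambda>y. y - P y) ` (R ` M)"
proof
  show "(\<lambda>y. y - P y) ` R ` M \<subseteq> Q ` l2"
    using M_l2 by (auto simp: Q_def intro!: imageI)
  show "Q ` l2 \<subseteq> (\<lambda>y. y - P y) ` R ` M"
  proof
    fix y assume "y \<in> Q ` l2"
    then obtain x where x: "x \<in> l2" "y = Q x" by auto
    have "C x \<in> C ` M" using C_range x by auto
    then obtain m where m: "m \<in> M" "C x = C m" by auto
    have ml: "m \<in> l2" using m M_l2 by auto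
    have "C (x - m) = 0" using m x ml by simp
    hence Pk: "P (x - m) = R (x - m)" by (simp add: C_def)
    have "P (P (x - m)) = P (x - m)" using x ml by (intro P_idem) simp
    hence "Q (x - m) = 0" by (simp only: Q_def Pk[symmetric] diff_self)
    hence "Q x = Q m" using lop_diff_app[OF Q_lop x(1) ml] by simp
    thus "y \<in> (\<lambda>y. y - P y) ` R ` M" using x m by (auto simp: Q_def)
  qed
qed

lemma RM_sub: "fv.subspace (R ` M)"
  by (rule subspace_image[OF linon_subset[OF lop_linon[OF R_lop] M_l2] M_sub])

lemma RM_l2: "R ` M \<subseteq> M" by (rule RM)

lemma D_inj_RM: "inj_on (\<lambda>y. y - P y) (R ` M)"
proof (rule inj_onI)
  fix a b assume ab: "a \<in> R ` M" "b \<in> R ` M" "a - P a = b - P b"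
  have d: "a - b \<in> R ` M" using ab fv.subspace_diff[OF RM_sub] by blast
  then obtain m where m: "m \<in> M" "a - b = R m" by auto
  have ml: "m \<in> l2" using m M_l2 by auto
  have dl: "a - b \<in> M" using d RM by auto
  have abl: "a \<in> l2" "b \<in> l2" using ab RM M_l2 by auto
  have "P (a - b) = a - b" using ab abl by (simp add: algebra_simps)
  moreover have "R (a - b) = a - b" using m ml by simp
  ultimately have "C (a - b) = 0" by (simp add: C_def)
  hence "a - b = 0" using C_ker_M dl by blast
  thus "a = b" by simp
qed

lemma D_lop: "lop (\<lambda>y. y - P y)" by (rule lop_diff[OF lop_id P_lop])

lemma rankQ: "cdim (Q ` l2) = cdim (R ` M)"
  unfolding Q_range
  by (rule cdim_image_inj[OF linon_subset[OF lop_linon[OF D_lop]] RM_sub D_inj_RM])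
     (use RM M_l2 in auto)

definition M0 where "M0 = {x\<in>M. P x = 0}"

lemma M0_sub: "fv.subspace M0"
  unfolding M0_def by (rule subspace_kernel[OF linon_subset[OF lop_linon[OF P_lop] M_l2] M_sub])

lemma M0_eq: "cdim M0 = cdim (R ` M)"
proof (rule antisym)
  have inj: "inj_on R M0"
  proof (rule inj_onI)
    fix a b assume ab: "a \<in> M0" "b \<in> M0" "R a = R b"
    have d: "a - b \<in> M0" using ab fv.subspace_diff[OF M0_sub] by blast
    have abl: "a \<in> l2" "b \<in> l2" using ab M_l2 by (auto simp: M0_def)
    have c0: "C (a - b) = 0" using ab abl d by (simp add: C_def M0_def)
    have "a - b \<in> M" using d by (simp add: M0_def)
    hence "a - b = 0" using C_ker_M c0 by blast
    thus "a = b" by simp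
  qed
  have "cdim M0 = cdim (R ` M0)"
    by (rule cdim_image_inj[OF linon_subset[OF lop_linon[OF R_lop]] M0_sub inj, symmetric])
       (use M_l2 in \<open>auto simp: M0_def\<close>)
  also have "\<dots> \<le> cdim (R ` M)" by (intro cdim_mono) (auto simp: M0_def)
  finally show "cdim M0 \<le> cdim (R ` M)" .
  have into: "(\<lambda>y. y - P y) ` (R ` M) \<subseteq> M0"
  proof
    fix z assume "z \<in> (\<lambda>y. y - P y) ` (R ` M)"
    then obtain y where y: "y \<in> R ` M" "z = y - P y" by auto
    have yM: "y \<in> M" using y RM by auto
    have yl: "y \<in> l2" using yM M_l2 by auto
    have "P y \<in> M" using yM PM by auto
    hence "z \<in> M" using y yM fv.subspace_diff[OF M_sub] by auto
    moreover have "P z = 0" using y yl by simp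
    ultimately show "z \<in> M0" by (simp add: M0_def)
  qed
  have "cdim (R ` M) = cdim ((\<lambda>y. y - P y) ` (R ` M))"
    by (rule cdim_image_inj[OF linon_subset[OF lop_linon[OF D_lop]] RM_sub D_inj_RM, symmetric])
       (use RM M_l2 in auto)
  also have "\<dots> \<le> cdim M0" using into by (rule cdim_mono)
  finally show "cdim (R ` M) \<le> cdim M0" .
qed

lemma M_split: "cdim M = cdim (P ` M) + cdim M0"
proof (rule antisym)
  have linP: "linon P M" using lop_linon[OF P_lop] M_l2 by (rule linon_subset)
  show "cdim M \<le> cdim (P ` M) + cdim M0"
    using cdim_rank_nullity_le[OF linP M_sub] unfolding M0_def .
  show "cdim (P ` M) + cdim M0 \<le> cdim M"
  proof (rule cdim_direct_ge)
    show "fv.subspace (P ` M)" by (rule subspace_image[OF linP M_sub])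
    show "fv.subspace M0" by (rule M0_sub)
    show "P ` M \<subseteq> M" by (rule PM)
    show "M0 \<subseteq> M" by (auto simp: M0_def)
    show "P ` M \<inter> M0 \<subseteq> {0}"
    proof
      fix y assume "y \<in> P ` M \<inter> M0"
      then obtain z where z: "z \<in> M" "y = P z" "P y = 0" by (auto simp: M0_def)
      have "z \<in> l2" using z M_l2 by auto
      thus "y \<in> {0}" using z by simp
    qed
  qed
qed

lemma ineqs:
  "cdim (R ` M) + cdim E1 \<le> cdim (P ` M) + cdim Em"
  "cdim (P ` M) + cdim Em \<le> cdim (R ` M) + cdim E1"
proof -
  have e1: "E1 = {z\<in>l2. P z = z \<and> R z = 0}" by (rule E1_char)
  have em: "Em = {z\<in>l2. P z = 0 \<and> R z = z}" using Em_char by auto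
  have e1': "E1 = {z\<in>l2. R z = 0 \<and> P z = z}" using E1_char by auto
  have em': "Em = {z\<in>l2. R z = z \<and> P z = 0}" by (rule Em_char)
  show "cdim (R ` M) + cdim E1 \<le> cdim (P ` M) + cdim Em"
    using proj_ineq[OF P_lop P_sa P_idem R_lop R_sa R_idem M_sub M_l2 PM RM] E1_M
    unfolding e1 em by blast
  show "cdim (P ` M) + cdim Em \<le> cdim (R ` M) + cdim E1"
    using proj_ineq[OF R_lop R_sa R_idem P_lop P_sa P_idem M_sub M_l2 RM PM] Em_M
    unfolding e1' em' by blast
qed

lemma finite_case:
  assumes f1: "cdim E1 \<noteq> \<infinity>" and f2: "cdim Em \<noteq> \<infinity>"
  shows "ereal_of_enat (cdim (C ` l2))
     = 2 * ereal_of_enat (cdim (Q ` l2)) + ereal_of_enat (cdim E1) - ereal_of_enat (cdim Em)"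
proof -
  have fa: "cdim (P ` M) \<noteq> \<infinity>" "cdim (R ` M) \<noteq> \<infinity>"
    using enat_le_fin[OF cdim_mono[OF PM] finM] enat_le_fin[OF cdim_mono[OF RM] finM] by auto
  obtain a where a: "cdim (P ` M) = enat a" using fa by (cases "cdim (P ` M)") auto
  obtain b where b: "cdim (R ` M) = enat b" using fa by (cases "cdim (R ` M)") auto
  obtain d1 where d1: "cdim E1 = enat d1" using f1 by (cases "cdim E1") auto
  obtain d2 where d2: "cdim Em = enat d2" using f2 by (cases "cdim Em") auto
  have "a + d2 = b + d1" using ineqs a b d1 d2 by simp
  moreover have "cdim (C ` l2) = enat (a + b)" using rankC M_split M0_eq a b by simp
  moreover have "cdim (Q ` l2) = enat b" using rankQ b by simp
  ultimately show ?thesis using d1 d2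
    by (simp add: ereal_of_enat_def)
qed

end

lemma infinite_case:
  assumes infC: "cdim (C ` l2) = \<infinity>" and f1: "cdim E1 \<noteq> \<infinity>"
  shows "cdim (Q ` l2) = \<infinity>"
proof (rule ccontr)
  assume finQ: "cdim (Q ` l2) \<noteq> \<infinity>"
  let ?D = "\<lambda>f. f - P f" and ?DR = "\<lambda>f. f - R f"
  have D: "lop ?D" by (rule lop_diff[OF lop_id P_lop])
  have DR: "lop ?DR" by (rule lop_diff[OF lop_id R_lop])
  have Dsa: "adjp ?D ?D" using P_sa unfolding adjp_def by (simp add: cinner_diff_left cinner_diff_right)
  have DRsa: "adjp ?DR ?DR" using R_sa unfolding adjp_def by (simp add: cinner_diff_left cinner_diff_right)
  let ?Q' = "\<lambda>f. R (?D f)"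
  have Q'l: "lop ?Q'" by (rule lop_comp[OF R_lop D])
  have Qeq: "Q = (\<lambda>f. ?D (R f))" by (simp add: Q_def[abs_def])
  let ?G2 = "\<lambda>f. ?Q' (Q f)"
  have G2l: "lop ?G2" by (rule lop_comp[OF Q'l Q_lop])
  have finG2: "cdim (?G2 ` l2) \<noteq> \<infinity>"
    using enat_le_fin[OF rank_comp_le[OF Q'l Q_lop] finQ] .
  let ?G1 = "\<lambda>f. P f - P (R (P f))"
  let ?Z = "\<lambda>f. R (P f)"
  have G1l: "lop ?G1" by (rule lop_diff[OF P_lop lop_comp[OF P_lop lop_comp[OF R_lop P_lop]]])
  have Zl: "lop ?Z" by (rule lop_comp[OF R_lop P_lop])
  have G1sub: "fv.subspace (?G1 ` l2)" by (rule image_subspace_l2[OF G1l])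
  have linZ: "linon ?Z (?G1 ` l2)" by (rule linon_subset[OF lop_linon[OF Zl] image_sub_l2[OF G1l]])
  have s1: "cdim (?G1 ` l2) \<le> cdim (?Z ` ?G1 ` l2) + cdim {y\<in>?G1 ` l2. ?Z y = 0}"
    by (rule cdim_rank_nullity_le[OF linZ G1sub])
  have "?Z ` ?G1 ` l2 \<subseteq> ?G2 ` l2"
  proof
    fix y assume "y \<in> ?Z ` ?G1 ` l2"
    then obtain x where x: "x \<in> l2" "y = ?Z (?G1 x)" by auto
    have "?Z (?G1 x) = ?G2 (?Z x)" using x by (simp add: Q_def algebra_simps)
    thus "y \<in> ?G2 ` l2" using x by auto
  qed
  hence s2: "cdim (?Z ` ?G1 ` l2) \<le> cdim (?G2 ` l2)" by (rule cdim_mono)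
  have "{y\<in>?G1 ` l2. ?Z y = 0} \<subseteq> E1"
  proof
    fix y assume "y \<in> {y\<in>?G1 ` l2. ?Z y = 0}"
    then obtain x where x: "x \<in> l2" "y = ?G1 x" "R (P y) = 0" by auto
    have Py: "P y = y" using x by simp
    have "y \<in> l2" using x by simp
    thus "y \<in> E1" unfolding E1_char using Py x(3) by simp
  qed
  hence s3: "cdim {y\<in>?G1 ` l2. ?Z y = 0} \<le> cdim E1" by (rule cdim_mono)
  have finG1: "cdim (?G1 ` l2) \<noteq> \<infinity>"
  proof -
    have "cdim (?G1 ` l2) \<le> cdim (?G2 ` l2) + cdim E1"
      using s1 s2 s3 by (meson add_mono order_trans)
    moreover have "cdim (?G2 ` l2) + cdim E1 \<noteq> \<infinity>" using finG2 f1 by (simp add: plus_eq_infty_iff_enat)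
    ultimately show ?thesis by (rule enat_le_fin)
  qed
  let ?S = "\<lambda>f. ?DR (P f)" and ?S' = "\<lambda>f. P (?DR f)"
  have Sl: "lop ?S" by (rule lop_comp[OF DR P_lop])
  have S'l: "lop ?S'" by (rule lop_comp[OF P_lop DR])
  have Sadj: "adjp ?S ?S'" by (rule adjp_comp[OF DR P_lop DRsa P_sa DR P_lop])
  have gram: "(\<lambda>f. ?S' (?S f)) ` l2 = ?G1 ` l2"
    by (rule image_cong) (auto simp: algebra_simps)
  have finS: "cdim (?S ` l2) \<noteq> \<infinity>"
  proof -
    have "cdim (?S ` l2) \<le> cdim ((\<lambda>f. ?S' (?S f)) ` l2)"
      using rank_le_rank_gram[OF Sl S'l Sadj] finG1 gram by simp
    thus ?thesis using finG1 gram enat_le_fin by simp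
  qed
  have finS': "cdim (?S' ` l2) \<noteq> \<infinity>"
    using enat_le_fin[OF rank_adj_le[OF S'l Sl adjp_sym[OF Sadj] finS] finS] .
  have "C ` l2 \<subseteq> {a + b | a b. a \<in> ?S' ` l2 \<and> b \<in> Q ` l2}"
  proof
    fix y assume "y \<in> C ` l2"
    then obtain x where x: "x \<in> l2" "y = C x" by auto
    have "C x = ?S' x + Q (- x)" using x by (simp add: C_def Q_def algebra_simps)
    thus "y \<in> {a + b | a b. a \<in> ?S' ` l2 \<and> b \<in> Q ` l2}" using x by blast
  qed
  hence "cdim (C ` l2) \<le> cdim {a + b | a b. a \<in> ?S' ` l2 \<and> b \<in> Q ` l2}" by (rule cdim_mono)
  hence "cdim (C ` l2) \<le> cdim (?S' ` l2) + cdim (Q ` l2)"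
    using cdim_sum_le by (rule order_trans)
  thus False using infC finS' finQ by (cases "cdim (?S' ` l2)"; cases "cdim (Q ` l2)") auto
qed

theorem main:
  assumes f1: "cdim E1 \<noteq> \<infinity>" and f2: "cdim Em \<noteq> \<infinity>"
  shows "ereal_of_enat (cdim (C ` l2))
     = 2 * ereal_of_enat (cdim (Q ` l2)) + ereal_of_enat (cdim E1) - ereal_of_enat (cdim Em)"
proof (cases "cdim (C ` l2) = \<infinity>")
  case True
  hence "cdim (Q ` l2) = \<infinity>" using infinite_case f1 by blast
  thus ?thesis using True f1 f2 by (cases "cdim E1"; cases "cdim Em") auto
next
  case False
  thus ?thesis using finite_case f1 f2 by blast
qed

end


lemma cinner_sum_right:
  assumes "\<And>i. i \<in> F \<Longrightarrow> u i \<in> l2" "g \<in> l2"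
  shows "cinner g (\<Sum>i\<in>F. sc (c i) (u i)) = (\<Sum>i\<in>F. c i * cinner g (u i))"
proof -
  have "cinner g (\<Sum>i\<in>F. sc (c i) (u i)) = cnj (cinner (\<Sum>i\<in>F. sc (c i) (u i)) g)" by (rule cinner_cnj)
  also have "\<dots> = cnj (\<Sum>i\<in>F. cnj (c i) * cinner (u i) g)" using cinner_sum_left[of F u g c] assms by simp
  also have "\<dots> = (\<Sum>i\<in>F. c i * cinner g (u i))" by (simp add: cinner_cnj[of g])
  finally show ?thesis .
qed

definition orthonormal :: "('i::countable \<Rightarrow> complex) set \<Rightarrow> bool" where
  "orthonormal W \<longleftrightarrow> (\<forall>u\<in>W. cinner u u = 1) \<and> (\<forall>u\<in>W. \<forall>w\<in>W. u \<noteq> w \<longrightarrow> cinner u w = 0)"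

lemma gs_step:
  assumes E: "fv.subspace E" "E \<subseteq> l2" and inf: "cdim E = \<infinity>"
    and W: "finite W" "W \<subseteq> E" "orthonormal W"
  shows "\<exists>v\<in>E. cinner v v = 1 \<and> (\<forall>u\<in>W. cinner u v = 0)"
proof -
  have "\<not> E \<subseteq> fv.span W" using cdim_finite_iff[of E] inf W(1) by auto
  then obtain x where x: "x \<in> E" "x \<notin> fv.span W" by auto
  have Wl: "\<And>u. u \<in> W \<Longrightarrow> u \<in> l2" using W E by auto
  have xl: "x \<in> l2" using x E by auto
  define y where "y = x - (\<Sum>u\<in>W. sc (cinner u x) u)"
  have sW: "(\<Sum>u\<in>W. sc (cinner u x) u) \<in> E"
    using W E by (intro fv.subspace_sum) (auto intro: fv.subspace_scale)
  have yE: "y \<in> E" unfolding y_def using x sW fv.subspace_diff[OF E(1)] by auto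
  have yl: "y \<in> l2" using yE E by auto
  have sl: "(\<Sum>u\<in>W. sc (cinner u x) u) \<in> l2" using sW E by auto
  have y0: "y \<noteq> 0"
  proof
    assume "y = 0"
    hence "x = (\<Sum>u\<in>W. sc (cinner u x) u)" by (simp add: y_def)
    moreover have "(\<Sum>u\<in>W. sc (cinner u x) u) \<in> fv.span W"
      by (intro fv.span_sum fv.span_scale fv.span_base)
    ultimately show False using x by simp
  qed
  have orth: "cinner w y = 0" if w: "w \<in> W" for w
  proof -
    have "cinner w (\<Sum>u\<in>W. sc (cinner u x) u) = (\<Sum>u\<in>W. cinner u x * cinner w u)"
      using cinner_sum_right[of W "\<lambda>u. u" w "\<lambda>u. cinner u x"] Wl w by simp
    also have "\<dots> = (\<Sum>u\<in>W. if u = w then cinner w x else 0)"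
      using W(3) w unfolding orthonormal_def by (intro sum.cong) auto
    also have "\<dots> = cinner w x" using W(1) w by simp
    finally show ?thesis unfolding y_def using Wl[OF w] xl sl by (simp add: cinner_diff_right)
  qed
  define n where "n = l2norm y"
  have n0: "n > 0" using y0 yl l2norm_zero_iff[OF yl] l2norm_nonneg[of y] unfolding n_def by linarith
  define v where "v = sc (complex_of_real (1/n)) y"
  have "v \<in> E" unfolding v_def by (rule fv.subspace_scale[OF E(1) yE])
  moreover have "cinner v v = 1"
  proof -
    have "cinner v v = complex_of_real (1/n) * (cnj (complex_of_real (1/n)) * cinner y y)"
      unfolding v_def by (simp only: cinner_sc_left cinner_sc_right)
    also have "cinner y y = complex_of_real (n * n)" by (simp add: cinner_self n_def power2_eq_square)
    finally have "cinner v v = complex_of_real ((1/n) * ((1/n) * (n * n)))" by simp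
    also have "(1/n) * ((1/n) * (n * n)) = 1" using n0 by (simp add: field_simps)
    finally show ?thesis by simp
  qed
  moreover have "\<forall>u\<in>W. cinner u v = 0" unfolding v_def using orth by (simp add: cinner_sc_right)
  ultimately show ?thesis by blast
qed

fun gsl :: "('i::countable \<Rightarrow> complex) set \<Rightarrow> nat \<Rightarrow> ('i \<Rightarrow> complex) list" where
  "gsl E 0 = []"
| "gsl E (Suc n) = gsl E n @ [SOME v. v \<in> E \<and> cinner v v = 1 \<and> (\<forall>u\<in>set (gsl E n). cinner u v = 0)]"

lemma gsl_len: "length (gsl E n) = n"
  by (induction n) auto

lemma gsl_prefix: "m \<le> n \<Longrightarrow> k < m \<Longrightarrow> gsl E n ! k = gsl E m ! k"
proof (induction n)
  case 0 thus ?case by simp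
next
  case (Suc n)
  show ?case
  proof (cases "m = Suc n")
    case True thus ?thesis by simp
  next
    case False
    hence "m \<le> n" using Suc by simp
    thus ?thesis using Suc gsl_len[of E n] by (simp add: nth_append)
  qed
qed

lemma gsl_props:
  assumes E: "fv.subspace E" "E \<subseteq> l2" and inf: "cdim E = \<infinity>"
  shows "set (gsl E n) \<subseteq> E \<and> orthonormal (set (gsl E n)) \<and> distinct (gsl E n)"
proof (induction n)
  case 0 thus ?case by (simp add: orthonormal_def)
next
  case (Suc n)
  let ?P = "\<lambda>v. v \<in> E \<and> cinner v v = 1 \<and> (\<forall>u\<in>set (gsl E n). cinner u v = 0)"
  have "\<exists>v. ?P v" using gs_step[OF E inf, of "set (gsl E n)"] Suc by auto
  hence v: "?P (SOME v. ?P v)" by (rule someI_ex)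
  define v where "v = (SOME v. ?P v)"
  have vP: "?P v" using v unfolding v_def .
  have vn: "v \<notin> set (gsl E n)" using vP by auto
  have "orthonormal (set (gsl E n @ [v]))"
    unfolding orthonormal_def
  proof (intro conjI ballI impI)
    fix u assume "u \<in> set (gsl E n @ [v])"
    thus "cinner u u = 1" using Suc vP unfolding orthonormal_def by auto
  next
    fix u w assume uw: "u \<in> set (gsl E n @ [v])" "w \<in> set (gsl E n @ [v])" "u \<noteq> w"
    show "cinner u w = 0"
    proof (cases "u = v")
      case True
      hence "w \<in> set (gsl E n)" using uw by auto
      hence "cinner w u = 0" using vP True by auto
      thus ?thesis using cinner_cnj[of u w] by simp
    next
      case False
      hence u: "u \<in> set (gsl E n)" using uw by auto
      show ?thesis
      proof (cases "w = v")
        case True thus ?thesis using vP u by auto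
      next
        case False
        hence "w \<in> set (gsl E n)" using uw by auto
        thus ?thesis using Suc u uw(3) unfolding orthonormal_def by auto
      qed
    qed
  qed
  thus ?case using Suc vP vn by (simp add: v_def[symmetric])
qed

definition gse :: "('i::countable \<Rightarrow> complex) set \<Rightarrow> nat \<Rightarrow> ('i \<Rightarrow> complex)" where
  "gse E n = gsl E (Suc n) ! n"

lemma gse_props:
  assumes E: "fv.subspace E" "E \<subseteq> l2" and inf: "cdim E = \<infinity>"
  shows "gse E n \<in> E" "cinner (gse E n) (gse E n) = 1"
    "j \<noteq> k \<Longrightarrow> cinner (gse E j) (gse E k) = 0"
proof -
  have mem: "gse E k \<in> set (gsl E N)" if "k < N" for k N
  proof -
    have "gse E k = gsl E N ! k" unfolding gse_def using gsl_prefix[of "Suc k" N k E] that by simp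
    thus ?thesis using that gsl_len[of E N] by simp
  qed
  have P: "set (gsl E N) \<subseteq> E \<and> orthonormal (set (gsl E N)) \<and> distinct (gsl E N)" for N
    by (rule gsl_props[OF E inf])
  show "gse E n \<in> E" using mem[of n "Suc n"] P[of "Suc n"] by auto
  show "cinner (gse E n) (gse E n) = 1" using mem[of n "Suc n"] P[of "Suc n"] by (auto simp: orthonormal_def)
  assume jk: "j \<noteq> k"
  let ?N = "Suc (max j k)"
  have "gse E j \<noteq> gse E k"
  proof -
    have "gse E j = gsl E ?N ! j" "gse E k = gsl E ?N ! k" unfolding gse_def
      using gsl_prefix[of "Suc j" ?N j E] gsl_prefix[of "Suc k" ?N k E] by simp_all
    moreover have "distinct (gsl E ?N)" using P[of ?N] by blast
    ultimately show ?thesis using jk gsl_len[of E ?N] by (simp del: gsl.simps add: nth_eq_iff_index_eq)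
  qed
  moreover have "orthonormal (set (gsl E ?N))" using P[of ?N] by blast
  moreover have "gse E j \<in> set (gsl E ?N)" "gse E k \<in> set (gsl E ?N)" by (rule mem, simp)+
  ultimately show "cinner (gse E j) (gse E k) = 0"
    unfolding orthonormal_def by blast
qed

lemma l2norm_diff_bound:
  assumes a: "a \<in> l2" and b: "b \<in> l2" and g: "g \<in> l2"
  shows "(l2norm (a - b))\<^sup>2 \<le> 2 * (l2norm (a - g))\<^sup>2 + 2 * (l2norm (b - g))\<^sup>2"
proof -
  have s1: "(\<lambda>i. (cmod ((a - b) i))\<^sup>2) summable_on UNIV" using l2_diff[OF a b] unfolding l2_def by simp
  have s2: "(\<lambda>i. 2 * (cmod ((a - g) i))\<^sup>2 + 2 * (cmod ((b - g) i))\<^sup>2) summable_on UNIV"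
    using l2_diff[OF a g] l2_diff[OF b g] unfolding l2_def
    by (intro summable_on_add summable_on_cmult_right) auto
  have "(l2norm (a - b))\<^sup>2 \<le> (\<Sum>\<^sub>\<infinity>i. 2 * (cmod ((a - g) i))\<^sup>2 + 2 * (cmod ((b - g) i))\<^sup>2)"
    unfolding l2norm_sq
  proof (rule infsum_mono[OF s1 s2])
    fix i
    have "(a - b) i = (a i - g i) + (g i - b i)" by simp
    hence "(cmod ((a - b) i))\<^sup>2 \<le> 2 * (cmod (a i - g i))\<^sup>2 + 2 * (cmod (g i - b i))\<^sup>2"
      using sq_bound[of "a i - g i" "g i - b i"] by simp
    also have "cmod (g i - b i) = cmod (b i - g i)" by (rule norm_minus_commute)
    finally show "(cmod ((a - b) i))\<^sup>2 \<le> 2 * (cmod ((a - g) i))\<^sup>2 + 2 * (cmod ((b - g) i))\<^sup>2" by simp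
  qed
  also have "\<dots> = 2 * (l2norm (a - g))\<^sup>2 + 2 * (l2norm (b - g))\<^sup>2"
    using l2_diff[OF a g] l2_diff[OF b g] unfolding l2_def l2norm_sq
    by (subst infsum_add) (auto intro: summable_on_cmult_right simp: infsum_cmult_right')
  finally show ?thesis .
qed

lemma compact_eig_finite:
  fixes K :: "('i::countable \<Rightarrow> complex) \<Rightarrow> ('i \<Rightarrow> complex)"
  assumes K: "compact_op K" and mu: "cmod \<mu> = 1"
  shows "cdim {f\<in>l2. K f = (\<lambda>i. \<mu> * f i)} \<noteq> \<infinity>"
proof
  let ?E = "{f\<in>l2. K f = (\<lambda>i. \<mu> * f i)}"
  assume inf: "cdim ?E = \<infinity>"
  have Kb: "bounded_op K" using K by (simp add: compact_op_def)
  have KL: "lop K" by (rule bop_lop[OF Kb])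
  have D: "lop (\<lambda>f. K f - sc \<mu> f)"
    by (rule lop_diff[OF KL]) (auto simp: lop_def linon_def sc_def fun_eq_iff algebra_simps intro: l2_sc[unfolded sc_def])
  have Eeq: "?E = {f\<in>l2. K f - sc \<mu> f = 0}" by (auto simp: sc_def fun_eq_iff)
  have Esub: "fv.subspace ?E" unfolding Eeq by (rule subspace_kernel[OF lop_linon[OF D] subspace_l2])
  have El2: "?E \<subseteq> l2" by auto
  define e where "e = gse ?E"
  have eE: "e n \<in> ?E" for n unfolding e_def by (rule gse_props(1)[OF Esub El2 inf])
  have e1: "cinner (e n) (e n) = 1" for n unfolding e_def by (rule gse_props(2)[OF Esub El2 inf])
  have e0: "j \<noteq> k \<Longrightarrow> cinner (e j) (e k) = 0" for j k unfolding e_def by (rule gse_props(3)[OF Esub El2 inf])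
  have el: "e n \<in> l2" for n using eE by auto
  have nrm: "l2norm (e n) = 1" for n
  proof -
    have "complex_of_real ((l2norm (e n))\<^sup>2) = 1" using e1[of n] by (simp only: cinner_self)
    hence "(l2norm (e n))\<^sup>2 = 1" by (simp only: of_real_eq_1_iff)
    thus ?thesis using l2norm_nonneg[of "e n"] by (simp add: power2_eq_1_iff)
  qed
  have ex: "\<forall>x::nat \<Rightarrow> ('i \<Rightarrow> complex). (\<forall>n. x n \<in> l2) \<longrightarrow> (\<exists>B. \<forall>n. l2norm (x n) \<le> B) \<longrightarrow>
        (\<exists>r g. strict_mono r \<and> g \<in> l2 \<and> (\<lambda>n. l2norm (\<lambda>i. K (x (r n)) i - g i)) \<longlonglongrightarrow> 0)"
    using K unfolding compact_op_def by blast
  have bd: "\<exists>B. \<forall>n. l2norm (e n) \<le> B" using nrm by (intro exI[of _ 1]) simp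
  obtain r g where rg: "strict_mono r" "g \<in> l2" "(\<lambda>n. l2norm (\<lambda>i. K (e (r n)) i - g i)) \<longlonglongrightarrow> 0"
    using spec[OF ex, of e] el bd by blast
  have Ke: "K (e n) = sc \<mu> (e n)" for n using eE[of n] by (simp add: sc_def)
  have fe: "(\<lambda>i. K (e (r n)) i - g i) = sc \<mu> (e (r n)) - g" for n by (simp add: Ke fun_eq_iff)
  from rg(3) have "\<forall>\<^sub>F n in sequentially. l2norm (sc \<mu> (e (r n)) - g) < 1/2"
    unfolding fe by (intro order_tendstoD(2)) auto
  then obtain N where N: "\<And>n. n \<ge> N \<Longrightarrow> l2norm (sc \<mu> (e (r n)) - g) < 1/2"
    unfolding eventually_sequentially by auto
  let ?a = "sc \<mu> (e (r N))" and ?b = "sc \<mu> (e (r (Suc N)))"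
  have al: "?a \<in> l2" "?b \<in> l2" using el by auto
  have rneq: "r N \<noteq> r (Suc N)" using strict_monoD[OF rg(1), of N "Suc N"] by simp
  have "cinner (?a - ?b) (?a - ?b) = cnj \<mu> * \<mu> * 2"
  proof -
    have "?a - ?b = sc \<mu> (e (r N) - e (r (Suc N)))" by (simp add: sc_def fun_eq_iff algebra_simps)
    hence "cinner (?a - ?b) (?a - ?b) = cnj \<mu> * \<mu> * cinner (e (r N) - e (r (Suc N))) (e (r N) - e (r (Suc N)))"
      by (simp add: cinner_sc_left cinner_sc_right)
    also have "cinner (e (r N) - e (r (Suc N))) (e (r N) - e (r (Suc N))) = 2"
      using el e1 e0[OF rneq] e0[OF rneq[symmetric]]
      by (simp add: cinner_diff_left cinner_diff_right l2_diff)
    finally show ?thesis .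
  qed
  moreover have "cnj \<mu> * \<mu> = 1" using complex_norm_square[of \<mu>] mu by (simp add: mult.commute)
  ultimately have c2: "cinner (?a - ?b) (?a - ?b) = 2" by simp
  have "complex_of_real ((l2norm (?a - ?b))\<^sup>2) = complex_of_real 2"
    by (simp only: cinner_self[symmetric] c2 of_real_numeral)
  hence sq2: "(l2norm (?a - ?b))\<^sup>2 = 2" by (simp only: of_real_eq_iff)
  have "(l2norm (?a - ?b))\<^sup>2 \<le> 2 * (l2norm (?a - g))\<^sup>2 + 2 * (l2norm (?b - g))\<^sup>2"
    by (rule l2norm_diff_bound[OF al rg(2)])
  also have "\<dots> < 2 * (1/2)\<^sup>2 + 2 * (1/2)\<^sup>2"
  proof -
    have "(l2norm (?a - g))\<^sup>2 < (1/2)\<^sup>2" using N[of N] by (intro power_strict_mono) auto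
    moreover have "(l2norm (?b - g))\<^sup>2 < (1/2)\<^sup>2" using N[of "Suc N"] by (intro power_strict_mono) auto
    ultimately show ?thesis by simp
  qed
  finally show False using sq2 by (simp add: power2_eq_square)
qed


lemma adjp_diff:
  assumes "adjp X X'" "adjp Y Y'" "lop X" "lop Y" "lop X'" "lop Y'"
  shows "adjp (\<lambda>f. X f - Y f) (\<lambda>f. X' f - Y' f)"
  using assms unfolding adjp_def by (simp add: cinner_diff_left cinner_diff_right lop_l2)

lemma adjp_id: "adjp (\<lambda>f. f) (\<lambda>f. f)"
  unfolding adjp_def by simp

theorem corollary3p6:
  fixes V1 V2 :: "('i::countable \<Rightarrow> complex) \<Rightarrow> ('i \<Rightarrow> complex)"
  assumes "isometric_pair V1 V2"
    and "compact_op (defect V1 V2)"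
  shows "ereal_of_enat (rank (defect V1 V2))
         = 2 * ereal_of_enat (rank (commut V1 V2))
           + ereal_of_enat (cdim (eigsp V1 V2 1)) - ereal_of_enat (cdim (eigsp V1 V2 (-1)))"
proof -
  have I1: "isometry V1" and I2: "isometry V2" and comm: "\<And>f. f \<in> l2 \<Longrightarrow> V1 (V2 f) = V2 (V1 f)"
    using assms(1) by (auto simp: isometric_pair_def)
  have B1: "bounded_op V1" and B2: "bounded_op V2" using I1 I2 by (auto simp: isometry_def)
  define A1 where "A1 = adj V1"
  define A2 where "A2 = adj V2"
  have BA1: "bounded_op A1" and BA2: "bounded_op A2" using adj_props(1) B1 B2 by (auto simp: A1_def A2_def)
  have L1: "lop V1" and L2: "lop V2" and LA1: "lop A1" and LA2: "lop A2"
    using B1 B2 BA1 BA2 by (auto intro: bop_lop)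
  have ad1: "adjp V1 A1" and ad2: "adjp V2 A2"
    unfolding adjp_def A1_def A2_def using adj_props(2)[OF B1] adj_props(2)[OF B2] by auto
  have ad1': "adjp A1 V1" and ad2': "adjp A2 V2" using adjp_sym ad1 ad2 by auto
  have A1V1: "\<And>f. f \<in> l2 \<Longrightarrow> A1 (V1 f) = f" unfolding A1_def by (rule isometry_adj_left[OF I1])
  have A2V2: "\<And>f. f \<in> l2 \<Longrightarrow> A2 (V2 f) = f" unfolding A2_def by (rule isometry_adj_left[OF I2])
  note l2s[simp] = lop_l2[OF L1] lop_l2[OF L2] lop_l2[OF LA1] lop_l2[OF LA2] l2_diff l2_add l2_uminus
  note dif[simp] = lop_diff_app[OF L1] lop_diff_app[OF L2] lop_diff_app[OF LA1] lop_diff_app[OF LA2]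
  note z[simp] = lop_zero[OF L1] lop_zero[OF L2] lop_zero[OF LA1] lop_zero[OF LA2]
  define P where "P f = f - V1 (A1 f)" for f
  define R where "R f = V2 (P (A2 f))" for f
  have LP: "lop P" unfolding P_def[abs_def] by (rule lop_diff[OF lop_id lop_comp[OF L1 LA1]])
  have LR: "lop R" unfolding R_def[abs_def] by (rule lop_comp[OF L2 lop_comp[OF LP LA2]])
  have VA: "adjp (\<lambda>f. V1 (A1 f)) (\<lambda>f. V1 (A1 f))" by (rule adjp_comp[OF L1 LA1 ad1 ad1' LA1 L1])
  have saP: "adjp P P" unfolding P_def[abs_def]
    by (rule adjp_diff[OF adjp_id VA lop_id lop_comp[OF L1 LA1] lop_id lop_comp[OF L1 LA1]])
  have PA2: "adjp (\<lambda>f. P (A2 f)) (\<lambda>f. V2 (P f))" by (rule adjp_comp[OF LP LA2 saP ad2' LP L2])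
  have saR: "adjp R R" unfolding R_def[abs_def]
    by (rule adjp_comp[OF L2 lop_comp[OF LP LA2] ad2 PA2 LA2 lop_comp[OF L2 LP]])
  have Pl2[simp]: "f \<in> l2 \<Longrightarrow> P f \<in> l2" for f using lop_l2[OF LP] .
  have A1P: "f \<in> l2 \<Longrightarrow> A1 (P f) = 0" for f by (simp add: P_def A1V1)
  have Pidem: "f \<in> l2 \<Longrightarrow> P (P f) = P f" for f
    using A1P[of f] by (simp add: P_def[of "P f"])
  have Ridem: "f \<in> l2 \<Longrightarrow> R (R f) = R f" for f
    by (simp add: R_def A2V2 Pidem)
  interpret tp: twoproj P R
    by unfold_locales (use LP LR saP saR Pidem Ridem in auto)
  have Cdef: "defect V1 V2 f = tp.C f" if f: "f \<in> l2" for f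
  proof -
    have "R f = V2 (A2 f) - V1 (V2 (A1 (A2 f)))"
      using f comm[of "A1 (A2 f)"] by (simp add: R_def P_def)
    thus ?thesis by (simp add: defect_def tp.C_def P_def fun_eq_iff flip: A1_def A2_def)
  qed
  have rankC: "rank (defect V1 V2) = cdim (tp.C ` l2)"
    unfolding rank_def using Cdef by (metis image_cong)
  have e1: "eigsp V1 V2 1 = tp.E1"
    unfolding eigsp_def tp.E1_def using Cdef by auto
  have em: "eigsp V1 V2 (-1) = tp.Em"
  proof -
    have "(\<lambda>i. - 1 * f i) = - f" for f :: "'i \<Rightarrow> complex" by (simp add: fun_eq_iff)
    thus ?thesis unfolding eigsp_def tp.Em_def using Cdef by auto
  qed
  have "cdim (eigsp V1 V2 1) \<noteq> \<infinity>" unfolding eigsp_def by (rule compact_eig_finite[OF assms(2)]) simp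
  hence f1: "cdim tp.E1 \<noteq> \<infinity>" using e1 by simp
  have "cdim (eigsp V1 V2 (-1)) \<noteq> \<infinity>" unfolding eigsp_def by (rule compact_eig_finite[OF assms(2)]) simp
  hence f2: "cdim tp.Em \<noteq> \<infinity>" using em by simp
  define T' where "T' f = A1 (V2 f) - V2 (A1 f)" for f
  have commdef: "commut V1 V2 = (\<lambda>f. A2 (V1 f) - V1 (A2 f))"
    by (simp add: commut_def A1_def A2_def fun_eq_iff)
  have LT: "lop (commut V1 V2)" unfolding commdef
    by (rule lop_diff[OF lop_comp[OF LA2 L1] lop_comp[OF L1 LA2]])
  have LT': "lop T'" unfolding T'_def[abs_def]
    by (rule lop_diff[OF lop_comp[OF LA1 L2] lop_comp[OF L2 LA1]])
  have adT: "adjp (commut V1 V2) T'" unfolding commdef T'_def[abs_def]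
    by (rule adjp_diff[OF adjp_comp[OF LA2 L1 ad2' ad1 L2 LA1] adjp_comp[OF L1 LA2 ad1 ad2' LA1 L2]
          lop_comp[OF LA2 L1] lop_comp[OF L1 LA2] lop_comp[OF LA1 L2] lop_comp[OF L2 LA1]])
  have rT: "rank (commut V1 V2) = cdim (T' ` l2)"
    unfolding rank_def by (rule rank_adj_eq[OF LT LT' adT])
  have Qf: "tp.Q f = V1 (T' (A2 f))" if f: "f \<in> l2" for f
  proof -
    have "tp.Q f = V1 (A1 (R f))" by (simp add: tp.Q_def P_def f)
    also have "A1 (R f) = T' (A2 f)"
      using f comm[of "A1 (A2 f)", symmetric] by (simp add: R_def P_def T'_def A1V1)
    finally show ?thesis .
  qed
  have A2surj: "A2 ` l2 = l2"
  proof
    show "A2 ` l2 \<subseteq> l2" by auto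
    show "l2 \<subseteq> A2 ` l2"
    proof
      fix g :: "'i \<Rightarrow> complex" assume "g \<in> l2"
      thus "g \<in> A2 ` l2" using A2V2[of g] by (metis imageI lop_l2[OF L2])
    qed
  qed
  have "tp.Q ` l2 = V1 ` (T' ` l2)"
  proof -
    have "tp.Q ` l2 = (\<lambda>f. V1 (T' (A2 f))) ` l2" using Qf by (rule image_cong[OF refl])
    also have "\<dots> = V1 ` T' ` A2 ` l2" by (simp add: image_image)
    finally show ?thesis using A2surj by simp
  qed
  moreover have "cdim (V1 ` (T' ` l2)) = cdim (T' ` l2)"
  proof (rule cdim_image_inj)
    show "linon V1 (T' ` l2)" by (rule linon_subset[OF lop_linon[OF L1] image_sub_l2[OF LT']])
    show "fv.subspace (T' ` l2)" by (rule image_subspace_l2[OF LT'])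
    show "inj_on V1 (T' ` l2)"
      using A1V1 image_sub_l2[OF LT'] by (metis inj_on_def subsetD)
  qed
  ultimately have rQ: "rank (commut V1 V2) = cdim (tp.Q ` l2)" using rT by simp
  show ?thesis unfolding rankC rQ e1 em by (rule tp.main[OF f1 f2])
qed


end
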